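(* Let $K\ge1$, $\delta>1$, $\alpha\in(0,1)$ with $p/n\le\delta^{-1}<1-\alpha$, $\tau>0$, and positive constants $\phi_*,\phi^*$. If $(Y,X)\in U$ and $X\in U_x$, then $$\frac1n\sum_{i=1}^nH_i\otimes(x_ix_i^T)\succeq c_1(I_K\otimes\Sigma),$$ where $c_1>0$ depends only on $(K,\tau,\alpha,\phi_* )$.
   Context: $\Sigma\in\mathbb{R}^{p\times p}$ is positive definite; $x_i^T$ are the rows of $X\in\mathbb{R}^{n\times p}$; $Y$ has rows $\mathsf y_i\in\mathbb{R}^{K+1}$. $\mathcal L_i(u)=-\sum_k\mathsf y_{ik}u_k+\log\sum_{k'}e^{u_{k'}}$, $\hat{\mathsf B}\in\arg\min_{\mathsf B\in\mathbb{R}^{p\times(K+1)}}\sum_i\mathcal L_i(\mathsf B^Tx_i)$, $U=\{(Y,X):\hat{\mathsf B}\text{ exists},\ \|X\hat{\mathsf B}(I_{K+1}-\frac{\mathbf 1\mathbf 1^T}{K+1})\|_F^2<n\tau\}$. $\mathcal I=\{I\subset[n]:|I|=\lceil n(1-\alpha)\rceil\}$, $P_I=\sum_{i\in I}e_ie_i^T$, $U_x=\{X:\min_{I\in\mathcal I}\lambda_{\min}(\frac1n\Sigma^{-1/2}X^TP_IX\Sigma^{-1/2})\ge\phi_*^2,\ \frac1{\sqrt n}\|X\Sigma^{-1/2}\|_{op}\le\phi^*\}$. $Q\in\mathbb{R}^{(K+1)\times K}$ with $QQ^T=I_{K+1}-\frac{1}{K+1}\mathbf 1\mathbf 1^T$,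 $Q^TQ=I_K$; $L_i(u)=\mathcal L_i(Qu)$; $\hat B=\hat{\mathsf B}Q$; $H_i=\nabla^2L_i(\hat B^Tx_i)$. *)

theory Defs
  imports "HOL-Analysis.Analysis"
begin

text \<open>Matrices of varying size are represented as functions nat => nat => real;
  only the entries inside the stated index ranges are relevant.\<close>

type_synonym rvec = "nat \<Rightarrow> real"
type_synonym rmat = "nat \<Rightarrow> nat \<Rightarrow> real"

definition mmul :: "nat \<Rightarrow> rmat \<Rightarrow> rmat \<Rightarrow> rmat" where
  "mmul m A B = (\<lambda>i j. \<Sum>k<m. A i k * B k j)"

definition mvec :: "nat \<Rightarrow> rmat \<Rightarrow> rvec \<Rightarrow> rvec" where
  "mvec m A v = (\<lambda>i. \<Sum>k<m. A i k * v k)"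

definition transp :: "rmat \<Rightarrow> rmat" where
  "transp A = (\<lambda>i j. A j i)"

definition idm :: rmat where
  "idm = (\<lambda>i j. if i = j then 1 else 0)"

definition msub :: "rmat \<Rightarrow> rmat \<Rightarrow> rmat" where
  "msub A B = (\<lambda>i j. A i j - B i j)"

definition mscale :: "real \<Rightarrow> rmat \<Rightarrow> rmat" where
  "mscale c A = (\<lambda>i j. c * A i j)"

definition mat_on :: "nat \<Rightarrow> nat \<Rightarrow> rmat \<Rightarrow> bool" where
  "mat_on n m A \<longleftrightarrow> (\<forall>i j. (n \<le> i \<or> m \<le> j) \<longrightarrow> A i j = 0)"

definition mat_eq :: "nat \<Rightarrow> nat \<Rightarrow> rmat \<Rightarrow> rmat \<Rightarrow> bool" where
  "mat_eq n m A B \<longleftrightarrow> (\<forall>i<n. \<forall>j<m. A i j = B i j)"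

definition sym_mat :: "nat \<Rightarrow> rmat \<Rightarrow> bool" where
  "sym_mat n A \<longleftrightarrow> (\<forall>i<n. \<forall>j<n. A i j = A j i)"

definition quad :: "nat \<Rightarrow> rmat \<Rightarrow> rvec \<Rightarrow> real" where
  "quad n A v = (\<Sum>i<n. \<Sum>j<n. v i * A i j * v j)"

definition pos_def :: "nat \<Rightarrow> rmat \<Rightarrow> bool" where
  "pos_def n A \<longleftrightarrow> sym_mat n A \<and> (\<forall>v. (\<exists>i<n. v i \<noteq> 0) \<longrightarrow> quad n A v > 0)"

definition psd :: "nat \<Rightarrow> rmat \<Rightarrow> bool" where
  "psd n A \<longleftrightarrow> (\<forall>v. quad n A v \<ge> 0)"

definition loewner_ge :: "nat \<Rightarrow> rmat \<Rightarrow> rmat \<Rightarrow> bool" where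
  "loewner_ge n A B \<longleftrightarrow> psd n (msub A B)"

definition is_eigenvalue :: "nat \<Rightarrow> rmat \<Rightarrow> real \<Rightarrow> bool" where
  "is_eigenvalue n A l \<longleftrightarrow>
     (\<exists>v. (\<exists>i<n. v i \<noteq> 0) \<and> (\<forall>i<n. mvec n A v i = l * v i))"

definition lambda_min :: "nat \<Rightarrow> rmat \<Rightarrow> real" where
  "lambda_min n A = Inf {l. is_eigenvalue n A l}"

definition inv_sqrt :: "nat \<Rightarrow> rmat \<Rightarrow> rmat" where
  "inv_sqrt n Sig = (THE S. mat_on n n S \<and> pos_def n S \<and>
       mat_eq n n (mmul n S (mmul n Sig S)) idm)"

definition vnorm :: "nat \<Rightarrow> rvec \<Rightarrow> real" where
  "vnorm n v = sqrt (\<Sum>i<n. (v i)\<^sup>2)"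

definition opnorm :: "nat \<Rightarrow> nat \<Rightarrow> rmat \<Rightarrow> real" where
  "opnorm n m A = Sup {vnorm n (mvec m A v) | v. vnorm m v \<le> 1}"

definition frob_sq :: "nat \<Rightarrow> nat \<Rightarrow> rmat \<Rightarrow> real" where
  "frob_sq n m A = (\<Sum>i<n. \<Sum>j<m. (A i j)\<^sup>2)"

text \<open>Kronecker product A \<otimes> B with B of size p x p (row index (a,r) \<mapsto> a*p+r).\<close>
definition kron :: "nat \<Rightarrow> rmat \<Rightarrow> rmat \<Rightarrow> rmat" where
  "kron p A B = (\<lambda>i j. A (i div p) (j div p) * B (i mod p) (j mod p))"

definition centering :: "nat \<Rightarrow> rmat" where
  "centering m = (\<lambda>i j. idm i j - 1 / real m)"

definition projI :: "nat set \<Rightarrow> rmat" where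
  "projI I = (\<lambda>i j. if i = j \<and> i \<in> I then 1 else 0)"

definition mlloss :: "nat \<Rightarrow> rvec \<Rightarrow> rvec \<Rightarrow> real" where
  "mlloss m y u = - (\<Sum>k<m. y k * u k) + ln (\<Sum>k'<m. exp (u k'))"

definition total_loss :: "nat \<Rightarrow> nat \<Rightarrow> nat \<Rightarrow> rmat \<Rightarrow> rmat \<Rightarrow> rmat \<Rightarrow> real" where
  "total_loss n p m Y X B = (\<Sum>i<n. mlloss m (Y i) (mvec p (transp B) (X i)))"

definition partial :: "(rvec \<Rightarrow> real) \<Rightarrow> nat \<Rightarrow> rvec \<Rightarrow> real" where
  "partial f b u = deriv (\<lambda>s. f (u(b := u b + s))) 0"

definition hessian :: "(rvec \<Rightarrow> real) \<Rightarrow> rvec \<Rightarrow> rmat" where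
  "hessian f u = (\<lambda>a b. partial (\<lambda>v. partial f b v) a u)"

end

theory Submission
  imports Defs
begin

definition dotp :: "nat \<Rightarrow> rvec \<Rightarrow> rvec \<Rightarrow> real" where
  "dotp p u v = (\<Sum>i<p. u i * v i)"

definition orthn :: "nat \<Rightarrow> nat \<Rightarrow> (nat \<Rightarrow> rvec) \<Rightarrow> bool" where
  "orthn p m w \<longleftrightarrow> (\<forall>j<m. \<forall>l<m. dotp p (w j) (w l) = (if j = l then 1 else 0))"

definition res :: "nat \<Rightarrow> nat \<Rightarrow> (nat \<Rightarrow> rvec) \<Rightarrow> rvec \<Rightarrow> rvec" where
  "res p m w x = (\<lambda>i. x i - (\<Sum>j<m. dotp p (w j) x * w j i))"

lemma dotp_comm: "dotp p u v = dotp p v u"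
  unfolding dotp_def by (simp add: mult.commute)

lemma dotp_cong: "(\<And>i. i < p \<Longrightarrow> u i = u' i) \<Longrightarrow> (\<And>i. i < p \<Longrightarrow> v i = v' i) \<Longrightarrow>
   dotp p u v = dotp p u' v'"
  unfolding dotp_def by (rule sum.cong) auto

lemma dotp_nonneg: "dotp p v v \<ge> 0"
  unfolding dotp_def by (auto intro: sum_nonneg)

lemma dotp_zero: "dotp p v v = 0 \<Longrightarrow> i < p \<Longrightarrow> v i = 0"
  unfolding dotp_def by (subst (asm) sum_nonneg_eq_0_iff) auto

lemma dotp_sq_le: "i < p \<Longrightarrow> (v i)\<^sup>2 \<le> dotp p v v"
proof -
  assume i: "i < p"
  have "(\<Sum>j\<in>{i}. v j * v j) \<le> (\<Sum>j<p. v j * v j)"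
    by (rule sum_mono2) (use i in auto)
  thus ?thesis unfolding dotp_def by (simp add: power2_eq_square)
qed

lemma dotp_sum_right: "dotp p u (\<lambda>i. \<Sum>j\<in>J. c j * w j i) = (\<Sum>j\<in>J. c j * dotp p u (w j))"
  unfolding dotp_def by (simp add: sum_distrib_left sum_distrib_right mult_ac sum.swap[of _ J])

lemma dotp_sum_left: "dotp p (\<lambda>i. \<Sum>j\<in>J. c j * w j i) u = (\<Sum>j\<in>J. c j * dotp p (w j) u)"
  unfolding dotp_def by (simp add: sum_distrib_left sum_distrib_right mult_ac sum.swap[of _ J])

lemma dotp_lin_right: "dotp p u (\<lambda>i. a * v i + b * v' i) = a * dotp p u v + b * dotp p u v'"
  unfolding dotp_def by (simp add: sum.distrib sum_distrib_left algebra_simps)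

lemma dotp_lin_left: "dotp p (\<lambda>i. a * v i + b * v' i) u = a * dotp p v u + b * dotp p v' u"
  unfolding dotp_def by (simp add: sum.distrib sum_distrib_left algebra_simps)

lemma dotp_scale_left: "dotp p (\<lambda>i. a * v i) u = a * dotp p v u"
  unfolding dotp_def by (simp add: sum_distrib_left algebra_simps)

lemma dotp_scale_right: "dotp p u (\<lambda>i. a * v i) = a * dotp p u v"
  unfolding dotp_def by (simp add: sum_distrib_left algebra_simps)

lemma dotp_diff_right: "dotp p u (\<lambda>i. v i - v' i) = dotp p u v - dotp p u v'"
  unfolding dotp_def by (simp add: sum_subtractf algebra_simps)

lemma dotp_diff_left: "dotp p (\<lambda>i. v i - v' i) u = dotp p v u - dotp p v' u"
  unfolding dotp_def by (simp add: sum_subtractf algebra_simps)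

lemma orthn_expand:
  assumes "orthn p m w" "l < m"
  shows "dotp p (w l) (\<lambda>i. \<Sum>j<m. c j * w j i) = c l"
proof -
  have "dotp p (w l) (\<lambda>i. \<Sum>j<m. c j * w j i) = (\<Sum>j<m. c j * dotp p (w l) (w j))"
    by (rule dotp_sum_right)
  also have "\<dots> = (\<Sum>j<m. if j = l then c j else 0)"
    by (rule sum.cong) (use assms in \<open>auto simp: orthn_def\<close>)
  also have "\<dots> = c l" using assms(2) by simp
  finally show ?thesis .
qed

lemma res_orth: "orthn p m w \<Longrightarrow> l < m \<Longrightarrow> dotp p (w l) (res p m w x) = 0"
  unfolding res_def by (simp add: dotp_diff_right orthn_expand[of p m w l "\<lambda>j. dotp p (w j) x"])

lemma res_norm: assumes "orthn p m w"
  shows "dotp p (res p m w x) (res p m w x) = dotp p x x - (\<Sum>j<m. (dotp p (w j) x)\<^sup>2)"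
proof -
  let ?r = "res p m w x"
  have "dotp p ?r ?r = dotp p ?r x - dotp p ?r (\<lambda>i. \<Sum>j<m. dotp p (w j) x * w j i)"
    by (subst (2) res_def) (simp add: dotp_diff_right)
  also have "dotp p ?r (\<lambda>i. \<Sum>j<m. dotp p (w j) x * w j i) = 0"
    by (simp add: dotp_sum_right dotp_comm[of p ?r] res_orth[OF assms])
  also have "dotp p ?r x = dotp p x x - (\<Sum>j<m. dotp p (w j) x * dotp p (w j) x)"
    by (subst res_def) (simp add: dotp_diff_left dotp_sum_left)
  finally show ?thesis by (simp add: power2_eq_square)
qed

lemma bessel: "orthn p m w \<Longrightarrow> (\<Sum>j<m. (dotp p (w j) x)\<^sup>2) \<le> dotp p x x"
  using res_norm[of p m w x] dotp_nonneg[of p "res p m w x"] by linarith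

definition evec :: "nat \<Rightarrow> rvec" where "evec l = (\<lambda>i. if i = l then 1 else 0)"

lemma dotp_evec: "i < p \<Longrightarrow> dotp p u (evec i) = u i"
  unfolding dotp_def evec_def by (simp add: if_distrib cong: if_cong)

lemma dotp_evec_self: "i < p \<Longrightarrow> dotp p (evec i) (evec i) = 1"
  by (simp add: dotp_evec) (simp add: evec_def)

lemma orthn_sum_sq: "orthn p m w \<Longrightarrow> (\<Sum>i<p. \<Sum>j<m. (dotp p (w j) (evec i))\<^sup>2) = real m"
proof -
  assume o: "orthn p m w"
  have "(\<Sum>i<p. \<Sum>j<m. (dotp p (w j) (evec i))\<^sup>2) = (\<Sum>j<m. \<Sum>i<p. (w j i)\<^sup>2)"
    by (subst sum.swap) (simp add: dotp_evec)
  also have "\<dots> = (\<Sum>j<m. dotp p (w j) (w j))"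
    by (simp add: dotp_def power2_eq_square)
  also have "\<dots> = (\<Sum>j<m. 1)" using o by (simp add: orthn_def)
  finally show ?thesis by simp
qed

lemma orthn_bound: "orthn p m w \<Longrightarrow> m \<le> p"
proof -
  assume o: "orthn p m w"
  have "real m = (\<Sum>i<p. \<Sum>j<m. (dotp p (w j) (evec i))\<^sup>2)" using orthn_sum_sq[OF o] by simp
  also have "\<dots> \<le> (\<Sum>i<p. dotp p (evec i) (evec i))"
    by (rule sum_mono) (rule bessel[OF o])
  also have "\<dots> = real p" by (simp add: dotp_evec_self)
  finally show ?thesis by simp
qed

lemma perp_exists:
  assumes o: "orthn p k w" and k: "k < p"
  shows "\<exists>v. dotp p v v = 1 \<and> (\<forall>j<k. dotp p (w j) v = 0) \<and> (\<forall>i. p \<le> i \<longrightarrow> v i = 0)"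
proof -
  have "\<exists>i<p. dotp p (res p k w (evec i)) (res p k w (evec i)) \<noteq> 0"
  proof (rule ccontr)
    assume "\<not> ?thesis"
    hence h: "\<And>i. i < p \<Longrightarrow> (\<Sum>j<k. (dotp p (w j) (evec i))\<^sup>2) = 1"
      using res_norm[OF o] dotp_evec_self by fastforce
    have "real k = (\<Sum>i<p. \<Sum>j<k. (dotp p (w j) (evec i))\<^sup>2)" using orthn_sum_sq[OF o] by simp
    also have "\<dots> = real p" by (simp add: h)
    finally show False using k by simp
  qed
  then obtain i where i: "i < p" and nz: "dotp p (res p k w (evec i)) (res p k w (evec i)) \<noteq> 0" by blast
  define r where "r = res p k w (evec i)"
  define s where "s = sqrt (dotp p r r)"
  have spos: "s > 0" unfolding s_def using nz dotp_nonneg[of p r] r_def by auto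
  define v where "v = (\<lambda>j. if j < p then r j / s else 0)"
  have "dotp p v v = dotp p (\<lambda>j. (1/s) * r j) (\<lambda>j. (1/s) * r j)"
    by (rule dotp_cong) (auto simp: v_def)
  also have "\<dots> = (1/s)^2 * dotp p r r"
    unfolding dotp_def by (simp add: sum_distrib_left power2_eq_square mult_ac)
  also have "\<dots> = 1" using spos dotp_nonneg[of p r] unfolding s_def by (simp add: power_divide)
  finally have 1: "dotp p v v = 1" .
  have 2: "dotp p (w j) v = 0" if "j < k" for j
  proof -
    have "dotp p (w j) v = dotp p (w j) (\<lambda>l. (1/s) * r l)"
      by (rule dotp_cong) (auto simp: v_def)
    also have "\<dots> = (1/s) * dotp p (w j) r" by (rule dotp_scale_right)
    also have "\<dots> = 0" using res_orth[OF o that] by (simp add: r_def)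
    finally show ?thesis .
  qed
  show ?thesis using 1 2 by (intro exI[of _ v]) (auto simp: v_def)
qed

lemma quad_dotp: "quad p M v = dotp p v (mvec p M v)"
  unfolding quad_def dotp_def mvec_def by (simp add: sum_distrib_left mult_ac)

lemma mvec_cong: "(\<And>i. i < p \<Longrightarrow> x i = y i) \<Longrightarrow> mvec p M x = mvec p M y"
  unfolding mvec_def by (intro ext sum.cong) auto

lemma quad_cong: "(\<And>i. i < p \<Longrightarrow> x i = y i) \<Longrightarrow> quad p M x = quad p M y"
  unfolding quad_def by (intro sum.cong) auto

lemma mvec_lin: "mvec p M (\<lambda>i. a * u i + b * v i) j = a * mvec p M u j + b * mvec p M v j"
  unfolding mvec_def by (simp add: sum.distrib sum_distrib_left algebra_simps)

lemma mvec_scale: "mvec p M (\<lambda>i. a * u i) j = a * mvec p M u j"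
  unfolding mvec_def by (simp add: sum_distrib_left algebra_simps)

lemma mvec_scale': "mvec p M (\<lambda>i. a * u i) = (\<lambda>j. a * mvec p M u j)"
  by (rule ext) (rule mvec_scale)

lemma mvec_diff: "mvec p M (\<lambda>i. u i - v i) j = mvec p M u j - mvec p M v j"
  unfolding mvec_def by (simp add: sum_subtractf algebra_simps)

lemma mvec_sum: "mvec p M (\<lambda>i. \<Sum>l\<in>J. c l * w l i) j = (\<Sum>l\<in>J. c l * mvec p M (w l) j)"
  unfolding mvec_def by (simp add: sum_distrib_left sum_distrib_right mult_ac sum.swap[of _ J])

lemma sym_dotp: assumes "sym_mat p M" shows "dotp p u (mvec p M v) = dotp p (mvec p M u) v"
proof -
  have "dotp p u (mvec p M v) = (\<Sum>i<p. \<Sum>j<p. u i * M i j * v j)"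
    unfolding dotp_def mvec_def by (simp add: sum_distrib_left mult_ac)
  also have "\<dots> = (\<Sum>j<p. \<Sum>i<p. u i * M i j * v j)" by (rule sum.swap)
  also have "\<dots> = (\<Sum>j<p. \<Sum>i<p. M j i * u i * v j)"
    using assms unfolding sym_mat_def by (intro sum.cong refl) (simp add: mult_ac)
  also have "\<dots> = dotp p (mvec p M u) v"
    unfolding dotp_def mvec_def by (simp add: sum_distrib_right)
  finally show ?thesis .
qed

lemma quad_expand:
  assumes "sym_mat p M"
  shows "quad p M (\<lambda>i. v i + t * y i) = quad p M v + 2 * t * dotp p y (mvec p M v) + t^2 * quad p M y"
proof -
  have mv: "mvec p M (\<lambda>i. v i + t * y i) = (\<lambda>j. mvec p M v j + t * mvec p M y j)"
    using mvec_lin[of p M 1 v t y] by auto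
  have "quad p M (\<lambda>i. v i + t * y i) = dotp p (\<lambda>i. 1 * v i + t * y i) (\<lambda>j. 1 * mvec p M v j + t * mvec p M y j)"
    by (simp add: quad_dotp mv)
  also have "\<dots> = dotp p v (mvec p M v) + t * dotp p v (mvec p M y) + t * dotp p y (mvec p M v)
      + t * t * dotp p y (mvec p M y)"
    unfolding dotp_def by (simp add: sum.distrib sum_distrib_left algebra_simps)
  also have "dotp p v (mvec p M y) = dotp p y (mvec p M v)"
    using sym_dotp[OF assms, of v y] by (simp add: dotp_comm)
  finally show ?thesis by (simp add: quad_dotp power2_eq_square algebra_simps)
qed

lemma dotp_expand: "dotp p (\<lambda>i. v i + t * y i) (\<lambda>i. v i + t * y i) = dotp p v v + 2 * t * dotp p y v + t^2 * dotp p y y"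
  unfolding dotp_def by (simp add: sum.distrib sum_distrib_left power2_eq_square algebra_simps)

lemma quadratic_zero:
  fixes b c :: real
  assumes "\<And>t. 0 \<le> 2 * t * b + t^2 * c"
  shows "b = 0"
proof (rule ccontr)
  assume b: "b \<noteq> 0"
  define s where "s = 1 / (\<bar>c\<bar> + 1)"
  have s: "s > 0" "s * \<bar>c\<bar> < 1" unfolding s_def by (auto simp: field_simps)
  have "0 \<le> 2 * (- b * s) * b + (- b * s)^2 * c" by (rule assms)
  hence "0 \<le> b^2 * s * (s * c - 2)" by (simp add: power2_eq_square algebra_simps)
  moreover have "b^2 * s * (s * c - 2) < 0"
  proof -
    have "s * c \<le> s * \<bar>c\<bar>" using s by (simp add: mult_left_mono)
    hence "s * c - 2 < 0" using s by linarith
    moreover have "b^2 * s > 0" using b s by simp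
    ultimately show ?thesis by (simp add: mult_pos_neg)
  qed
  ultimately show False by linarith
qed

lemma cont_dotp: "continuous_on UNIV (\<lambda>v::rvec. dotp p (u v) (u' v))"
  if "\<And>i. continuous_on UNIV (\<lambda>v. u v i)" "\<And>i. continuous_on UNIV (\<lambda>v. u' v i)"
  unfolding dotp_def by (intro continuous_intros that)

lemma cont_quad: "continuous_on UNIV (\<lambda>v::rvec. quad p M v)"
  unfolding quad_def by (intro continuous_intros continuous_on_product_coordinates)

lemma compact_box: "compact {v::rvec. \<forall>i. v i \<in> (if i < p then {-1..1} else {0})}"
proof -
  have "compactin (product_topology (\<lambda>i. euclidean) UNIV)
          (PiE UNIV (\<lambda>i::nat. if i < p then {-1..1::real} else {0}))"
    by (subst compactin_PiE) auto
  moreover have "PiE UNIV (\<lambda>i::nat. if i < p then {-1..1::real} else {0})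
      = {v::rvec. \<forall>i. v i \<in> (if i < p then {-1..1} else {0})}"
    by (auto simp: PiE_def Pi_def)
  ultimately show ?thesis by (simp add: euclidean_product_topology)
qed

lemma rayleigh:
  assumes sym: "sym_mat p M" and o: "orthn p k w" and k: "k < p"
    and eig: "\<And>j i. j < k \<Longrightarrow> i < p \<Longrightarrow> mvec p M (w j) i = lam j * w j i"
  shows "\<exists>v \<mu>. dotp p v v = 1 \<and> (\<forall>j<k. dotp p (w j) v = 0) \<and> (\<forall>i<p. mvec p M v i = \<mu> * v i)"
proof -
  define C where "C = {v::rvec. \<forall>i. v i \<in> (if i < p then {-1..1} else {0})}
      \<inter> {v. dotp p v v = 1} \<inter> (\<Inter>j<k. {v. dotp p (w j) v = 0})"
  have cC: "compact C"
  proof -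
    have c1: "closed {v::rvec. dotp p v v = 1}"
      by (rule closed_Collect_eq) (rule cont_dotp, simp_all)
    have c2: "closed (\<Inter>j<k. {v::rvec. dotp p (w j) v = 0})"
      by (intro closed_INT ballI closed_Collect_eq cont_dotp) simp_all
    show ?thesis unfolding C_def
      by (intro compact_Int_closed compact_box c1 c2)
  qed
  have inC: "v \<in> C" if "dotp p v v = 1" "\<forall>j<k. dotp p (w j) v = 0" "\<forall>i. p \<le> i \<longrightarrow> v i = 0" for v
  proof -
    have "v i \<in> (if i < p then {-1..1} else {0})" for i
    proof (cases "i < p")
      case True
      have "(v i)^2 \<le> 1^2" using dotp_sq_le[OF True, of v] that by simp
      hence "\<bar>v i\<bar> \<le> 1" using abs_le_square_iff[of "v i" 1] by simp
      thus ?thesis using True by auto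
    qed (use that in auto)
    thus ?thesis using that unfolding C_def by auto
  qed
  obtain v0 where "dotp p v0 v0 = 1" "\<forall>j<k. dotp p (w j) v0 = 0" "\<forall>i. p \<le> i \<longrightarrow> v0 i = 0"
    using perp_exists[OF o k] by blast
  hence ne: "C \<noteq> {}" using inC by blast
  obtain v where vC: "v \<in> C" and vmin: "\<And>y. y \<in> C \<Longrightarrow> quad p M v \<le> quad p M y"
    using continuous_attains_inf[OF cC ne continuous_on_subset[OF cont_quad subset_UNIV]] by blast
  define m where "m = quad p M v"
  have v1: "dotp p v v = 1" and vperp: "\<And>j. j < k \<Longrightarrow> dotp p (w j) v = 0"
    using vC unfolding C_def by auto
  have key: "quad p M x \<ge> m * dotp p x x" if xp: "\<forall>j<k. dotp p (w j) x = 0" for x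
  proof (cases "dotp p x x = 0")
    case True
    have "quad p M x = quad p M (\<lambda>i. 0)" by (rule quad_cong) (use dotp_zero[OF True] in auto)
    thus ?thesis using True by (simp add: quad_def)
  next
    case False
    define s where "s = sqrt (dotp p x x)"
    have s: "s > 0" using False dotp_nonneg[of p x] unfolding s_def by auto
    define u where "u = (\<lambda>i. if i < p then x i / s else 0)"
    have uu: "dotp p u u = dotp p (\<lambda>i. (1/s) * x i) (\<lambda>i. (1/s) * x i)"
      by (rule dotp_cong) (auto simp: u_def)
    have "dotp p (\<lambda>i. (1/s) * x i) (\<lambda>i. (1/s) * x i) = (1/s)^2 * dotp p x x"
      by (simp only: dotp_scale_left dotp_scale_right power2_eq_square mult.assoc)
    also have "\<dots> = 1" using s False dotp_nonneg[of p x] unfolding s_def by (simp add: power_divide)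
    finally have u1: "dotp p u u = 1" using uu by simp
    have up: "\<forall>j<k. dotp p (w j) u = 0"
    proof (intro allI impI)
      fix j assume j: "j < k"
      have "dotp p (w j) u = dotp p (w j) (\<lambda>i. (1/s) * x i)" by (rule dotp_cong) (auto simp: u_def)
      also have "\<dots> = (1/s) * dotp p (w j) x" by (rule dotp_scale_right)
      finally show "dotp p (w j) u = 0" using xp j by simp
    qed
    have "u \<in> C" by (rule inC) (use u1 up in \<open>auto simp: u_def\<close>)
    hence "m \<le> quad p M u" using vmin m_def by auto
    also have "quad p M u = quad p M (\<lambda>i. (1/s) * x i)" by (rule quad_cong) (auto simp: u_def)
    also have "\<dots> = (1/s)^2 * quad p M x"
      by (simp only: quad_dotp mvec_scale' dotp_scale_left dotp_scale_right power2_eq_square mult.assoc)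
    finally have "m \<le> (1/s)^2 * quad p M x" .
    hence "m * s^2 \<le> quad p M x" using s by (simp add: field_simps power2_eq_square)
    moreover have "s^2 = dotp p x x" unfolding s_def using dotp_nonneg[of p x] by simp
    ultimately show ?thesis by simp
  qed
  have stat: "dotp p y (mvec p M v) - m * dotp p y v = 0" if yp: "\<forall>j<k. dotp p (w j) y = 0" for y
  proof (rule quadratic_zero)
    fix t
    have xp: "\<forall>j<k. dotp p (w j) (\<lambda>i. v i + t * y i) = 0"
      using yp vperp dotp_lin_right[of p _ 1 v t y] by simp
    have "m * dotp p (\<lambda>i. v i + t * y i) (\<lambda>i. v i + t * y i) \<le> quad p M (\<lambda>i. v i + t * y i)"
      using key[OF xp] .
    hence "m * (dotp p v v + 2 * t * dotp p y v + t^2 * dotp p y y) \<le>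
        quad p M v + 2 * t * dotp p y (mvec p M v) + t^2 * quad p M y"
      by (simp add: dotp_expand quad_expand[OF sym])
    thus "0 \<le> 2 * t * (dotp p y (mvec p M v) - m * dotp p y v) + t^2 * (quad p M y - m * dotp p y y)"
      using v1 m_def by (simp add: algebra_simps)
  qed
  define g where "g = (\<lambda>i. mvec p M v i - m * v i)"
  have gp: "\<forall>j<k. dotp p (w j) g = 0"
  proof (intro allI impI)
    fix j assume j: "j < k"
    have "dotp p (w j) g = dotp p (w j) (mvec p M v) - m * dotp p (w j) v"
      unfolding g_def by (simp add: dotp_diff_right dotp_scale_right)
    also have "dotp p (w j) (mvec p M v) = dotp p (mvec p M (w j)) v" by (rule sym_dotp[OF sym])
    also have "\<dots> = dotp p (\<lambda>i. lam j * w j i) v" by (rule dotp_cong) (use eig j in auto)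
    also have "\<dots> = 0" using vperp[OF j] by (simp add: dotp_scale_left)
    finally show "dotp p (w j) g = 0" using vperp[OF j] by simp
  qed
  have "dotp p g g = dotp p g (\<lambda>i. mvec p M v i - m * v i)"
    by (rule dotp_cong) (simp_all add: g_def)
  also have "\<dots> = dotp p g (mvec p M v) - m * dotp p g v"
    unfolding dotp_diff_right dotp_scale_right ..
  also have "\<dots> = 0" by (rule stat[OF gp])
  finally have gg: "dotp p g g = 0" .
  have "\<forall>i<p. mvec p M v i = m * v i"
  proof (intro allI impI)
    fix i assume "i < p"
    from dotp_zero[OF gg this] show "mvec p M v i = m * v i" unfolding g_def by simp
  qed
  thus ?thesis using v1 vperp by blast
qed

lemma spectral_partial:
  assumes sym: "sym_mat p M" and kp: "k \<le> p"
  shows "\<exists>w lam. orthn p k w \<and> (\<forall>j<k. \<forall>i<p. mvec p M (w j) i = lam j * w j i)"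
  using kp
proof (induction k)
  case 0
  show ?case by (auto simp: orthn_def)
next
  case (Suc k)
  then obtain w lam where o: "orthn p k w" and e: "\<forall>j<k. \<forall>i<p. mvec p M (w j) i = lam j * w j i"
    by auto
  obtain v \<mu> where v: "dotp p v v = 1" "\<forall>j<k. dotp p (w j) v = 0" "\<forall>i<p. mvec p M v i = \<mu> * v i"
    using rayleigh[OF sym o _ ] e Suc.prems by (metis Suc_le_lessD)
  define w' where "w' = w(k := v)"
  define lam' where "lam' = lam(k := \<mu>)"
  have "orthn p (Suc k) w'"
    unfolding orthn_def
  proof (intro allI impI)
    fix j l assume j: "j < Suc k" and l: "l < Suc k"
    show "dotp p (w' j) (w' l) = (if j = l then 1 else 0)"
      using o v j l unfolding w'_def orthn_def
      by (cases "j = k"; cases "l = k") (auto simp: less_Suc_eq dotp_comm)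
  qed
  moreover have "\<forall>j<Suc k. \<forall>i<p. mvec p M (w' j) i = lam' j * w' j i"
    using e v unfolding w'_def lam'_def by (auto simp: less_Suc_eq)
  ultimately show ?case by blast
qed

lemma orthn_complete:
  assumes o: "orthn p p w"
  shows "\<forall>i<p. x i = (\<Sum>j<p. dotp p (w j) x * w j i)"
proof (rule ccontr)
  assume nt: "\<not> (\<forall>i<p. x i = (\<Sum>j<p. dotp p (w j) x * w j i))"
  define r where "r = res p p w x"
  have nz: "dotp p r r \<noteq> 0"
  proof
    assume "dotp p r r = 0"
    hence "\<forall>i<p. r i = 0" using dotp_zero by blast
    hence "\<forall>i<p. x i = (\<Sum>j<p. dotp p (w j) x * w j i)"
      unfolding r_def res_def by (simp only: right_minus_eq)
    thus False using nt by blast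
  qed
  define s where "s = sqrt (dotp p r r)"
  have s: "s > 0" using nz dotp_nonneg[of p r] unfolding s_def by auto
  define v where "v = (\<lambda>i. (1/s) * r i)"
  have v1: "dotp p v v = 1"
  proof -
    have "dotp p v v = (1/s)^2 * dotp p r r"
      unfolding v_def by (simp only: dotp_scale_left dotp_scale_right power2_eq_square mult.assoc)
    also have "\<dots> = 1" using s nz dotp_nonneg[of p r] unfolding s_def by (simp add: power_divide)
    finally show ?thesis .
  qed
  have vp: "dotp p (w j) v = 0" if "j < p" for j
    unfolding v_def dotp_scale_right using res_orth[OF o that] by (simp add: r_def)
  have "orthn p (Suc p) (w(p := v))"
    unfolding orthn_def
  proof (intro allI impI)
    fix j l assume j: "j < Suc p" and l: "l < Suc p"
    show "dotp p ((w(p := v)) j) ((w(p := v)) l) = (if j = l then 1 else 0)"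
      using o v1 vp j l unfolding orthn_def
      by (cases "j = p"; cases "l = p") (auto simp: less_Suc_eq dotp_comm)
  qed
  from orthn_bound[OF this] show False by simp
qed

definition spec :: "nat \<Rightarrow> rmat \<Rightarrow> (nat \<Rightarrow> rvec) \<Rightarrow> (nat \<Rightarrow> real) \<Rightarrow> bool" where
  "spec p M w lam \<longleftrightarrow> orthn p p w \<and> (\<forall>j<p. \<forall>i<p. mvec p M (w j) i = lam j * w j i)"

lemma spectral: "sym_mat p M \<Longrightarrow> \<exists>w lam. spec p M w lam"
  unfolding spec_def using spectral_partial[of p M p] by auto

lemma spec_complete: "spec p M w lam \<Longrightarrow> i < p \<Longrightarrow> x i = (\<Sum>j<p. dotp p (w j) x * w j i)"
  unfolding spec_def using orthn_complete by blast

lemma mvec_expand: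
  assumes "spec p M w lam" "i < p"
  shows "mvec p M x i = (\<Sum>j<p. (lam j * dotp p (w j) x) * w j i)"
proof -
  have "mvec p M x = mvec p M (\<lambda>i. \<Sum>j<p. dotp p (w j) x * w j i)"
    by (rule mvec_cong) (rule spec_complete[OF assms(1)])
  hence "mvec p M x i = (\<Sum>j<p. dotp p (w j) x * mvec p M (w j) i)"
    by (simp add: mvec_sum)
  also have "\<dots> = (\<Sum>j<p. (lam j * dotp p (w j) x) * w j i)"
    using assms unfolding spec_def by (intro sum.cong) auto
  finally show ?thesis .
qed

lemma quad_from_mvec:
  assumes "orthn p p w" "\<And>i. i < p \<Longrightarrow> mvec p A x i = (\<Sum>j<p. d j * w j i)"
  shows "quad p A x = (\<Sum>j<p. d j * dotp p (w j) x)"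
proof -
  have "quad p A x = dotp p x (\<lambda>i. \<Sum>j<p. d j * w j i)"
    unfolding quad_dotp by (rule dotp_cong) (use assms in auto)
  also have "\<dots> = (\<Sum>j<p. d j * dotp p (w j) x)"
    by (simp add: dotp_sum_right dotp_comm)
  finally show ?thesis .
qed

lemma spec_quad:
  assumes "spec p M w lam"
  shows "quad p M x = (\<Sum>j<p. lam j * (dotp p (w j) x)\<^sup>2)"
proof -
  have "quad p M x = (\<Sum>j<p. (lam j * dotp p (w j) x) * dotp p (w j) x)"
    by (rule quad_from_mvec) (use assms in \<open>auto simp: spec_def intro: mvec_expand\<close>)
  thus ?thesis by (simp add: power2_eq_square mult_ac)
qed

lemma parseval:
  assumes "orthn p p w"
  shows "dotp p x x = (\<Sum>j<p. (dotp p (w j) x)\<^sup>2)"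
proof -
  have "dotp p x x = dotp p x (\<lambda>i. \<Sum>j<p. dotp p (w j) x * w j i)"
    by (rule dotp_cong) (use orthn_complete[OF assms] in auto)
  also have "\<dots> = (\<Sum>j<p. (dotp p (w j) x)\<^sup>2)"
    by (simp add: dotp_sum_right dotp_comm power2_eq_square)
  finally show ?thesis .
qed

lemma spec_eigval: "spec p M w lam \<Longrightarrow> j < p \<Longrightarrow> quad p M (w j) = lam j"
proof -
  assume s: "spec p M w lam" and j: "j < p"
  have "quad p M (w j) = dotp p (w j) (\<lambda>i. lam j * w j i)"
    unfolding quad_dotp by (rule dotp_cong) (use s j in \<open>auto simp: spec_def\<close>)
  also have "\<dots> = lam j" using s j by (simp add: dotp_scale_right spec_def orthn_def)
  finally show ?thesis .
qed

lemma orthn_nz: "orthn p p w \<Longrightarrow> j < p \<Longrightarrow> \<exists>i<p. w j i \<noteq> 0"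
proof (rule ccontr)
  assume o: "orthn p p w" and j: "j < p" and "\<not> (\<exists>i<p. w j i \<noteq> 0)"
  hence "dotp p (w j) (w j) = 0" unfolding dotp_def by auto
  thus False using o j unfolding orthn_def by auto
qed

lemma spec_pos: "pos_def p M \<Longrightarrow> spec p M w lam \<Longrightarrow> j < p \<Longrightarrow> lam j > 0"
  using spec_eigval[of p M w lam j] orthn_nz[of p w j] unfolding pos_def_def spec_def by auto

lemma pos_def_zero:
  assumes "pos_def p S" "\<And>i. i < p \<Longrightarrow> mvec p S d i = 0"
  shows "i < p \<Longrightarrow> d i = 0"
proof (rule ccontr)
  assume i: "i < p" "d i \<noteq> 0"
  hence "quad p S d > 0" using assms(1) unfolding pos_def_def by blast
  moreover have "quad p S d = dotp p d (\<lambda>i. 0)"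
    unfolding quad_dotp by (rule dotp_cong) (use assms(2) in auto)
  ultimately show False by (simp add: dotp_def)
qed

lemma mvec_mmul: "mvec m (mmul m A B) v = mvec m A (mvec m B v)"
proof (rule ext)
  fix i
  have "mvec m (mmul m A B) v i = (\<Sum>k<m. \<Sum>l<m. A i l * B l k * v k)"
    unfolding mvec_def mmul_def by (simp add: sum_distrib_right)
  also have "\<dots> = (\<Sum>l<m. \<Sum>k<m. A i l * B l k * v k)" by (rule sum.swap)
  also have "\<dots> = mvec m A (mvec m B v) i"
    unfolding mvec_def by (simp add: sum_distrib_left mult.assoc)
  finally show "mvec m (mmul m A B) v i = mvec m A (mvec m B v) i" .
qed

lemma mvec_evec: "l < p \<Longrightarrow> mvec p A (evec l) i = A i l"
  unfolding mvec_def evec_def by (simp add: if_distrib cong: if_cong)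

lemma mat_ext:
  assumes "mat_on p p A" "mat_on p p B" "\<And>x i. i < p \<Longrightarrow> mvec p A x i = mvec p B x i"
  shows "A = B"
proof (intro ext)
  fix i l
  show "A i l = B i l"
  proof (cases "i < p \<and> l < p")
    case True
    thus ?thesis using assms(3)[of i "evec l"] mvec_evec[of l p] by auto
  next
    case False
    thus ?thesis using assms(1,2) unfolding mat_on_def by auto
  qed
qed

lemma mat_eq_idm_mvec: "mat_eq p p A idm \<Longrightarrow> i < p \<Longrightarrow> mvec p A x i = x i"
proof -
  assume a: "mat_eq p p A idm" and i: "i < p"
  have "mvec p A x i = (\<Sum>l<p. idm i l * x l)"
    unfolding mvec_def using a i unfolding mat_eq_def by (intro sum.cong) auto
  also have "\<dots> = (\<Sum>l<p. if l = i then x l else 0)" by (intro sum.cong) (auto simp: idm_def)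
  also have "\<dots> = x i" using i by simp
  finally show ?thesis .
qed

lemma mvec_idm_mat_eq: "(\<And>x i. i < p \<Longrightarrow> mvec p A x i = x i) \<Longrightarrow> mat_eq p p A idm"
  unfolding mat_eq_def
proof (intro allI impI)
  fix i j assume h: "\<And>x i. i < p \<Longrightarrow> mvec p A x i = x i" and i: "i < p" and j: "j < p"
  have "A i j = mvec p A (evec j) i" using mvec_evec[OF j] by simp
  also have "\<dots> = evec j i" using h i by simp
  finally show "A i j = idm i j" by (simp add: evec_def idm_def)
qed

definition S0 :: "nat \<Rightarrow> (nat \<Rightarrow> rvec) \<Rightarrow> (nat \<Rightarrow> real) \<Rightarrow> rmat" where
  "S0 p w lam = (\<lambda>i l. if i < p \<and> l < p then (\<Sum>j<p. w j i * (1 / sqrt (lam j)) * w j l) else 0)"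

lemma S0_mvec: "i < p \<Longrightarrow> mvec p (S0 p w lam) x i = (\<Sum>j<p. (1 / sqrt (lam j) * dotp p (w j) x) * w j i)"
proof -
  assume i: "i < p"
  have "mvec p (S0 p w lam) x i = (\<Sum>l<p. \<Sum>j<p. w j i * (1 / sqrt (lam j)) * w j l * x l)"
    unfolding mvec_def S0_def using i by (simp add: sum_distrib_right)
  also have "\<dots> = (\<Sum>j<p. \<Sum>l<p. w j i * (1 / sqrt (lam j)) * w j l * x l)" by (rule sum.swap)
  also have "\<dots> = (\<Sum>j<p. (1 / sqrt (lam j) * dotp p (w j) x) * w j i)"
    unfolding dotp_def by (intro sum.cong refl) (simp add: sum_distrib_left sum_distrib_right mult_ac)
  finally show ?thesis .
qed

lemma S0_mvec_exp:
  assumes "orthn p p w" "i < p"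
  shows "mvec p (S0 p w lam) (\<lambda>i. \<Sum>j<p. b j * w j i) i = (\<Sum>j<p. (1 / sqrt (lam j) * b j) * w j i)"
  unfolding S0_mvec[OF assms(2)] using orthn_expand[OF assms(1)] by simp

lemma expansion_mvec:
  assumes "\<And>i. i < p \<Longrightarrow> x i = (\<Sum>j<p. b j * w j i)"
  shows "mvec p A x i = (\<Sum>j<p. b j * mvec p A (w j) i)"
proof -
  have "mvec p A x = mvec p A (\<lambda>i. \<Sum>j<p. b j * w j i)" by (rule mvec_cong) (use assms in auto)
  thus ?thesis by (simp add: mvec_sum)
qed


lemma S0_sym: "sym_mat p (S0 p w lam)"
  unfolding sym_mat_def S0_def by (auto simp: mult_ac)

lemma S0_mat_on: "mat_on p p (S0 p w lam)"
  unfolding mat_on_def S0_def by auto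

lemma S0_pos:
  assumes pd: "pos_def p Sig" and s: "spec p Sig w lam"
  shows "pos_def p (S0 p w lam)"
  unfolding pos_def_def
proof (intro conjI allI impI)
  show "sym_mat p (S0 p w lam)" by (rule S0_sym)
  fix v :: rvec assume "\<exists>i<p. v i \<noteq> 0"
  then obtain i where i: "i < p" "v i \<noteq> 0" by blast
  have o: "orthn p p w" using s by (simp add: spec_def)
  have lp: "\<And>j. j < p \<Longrightarrow> lam j > 0" using spec_pos[OF pd s] by blast
  have q: "quad p (S0 p w lam) v = (\<Sum>j<p. (1 / sqrt (lam j) * dotp p (w j) v) * dotp p (w j) v)"
    by (rule quad_from_mvec[OF o]) (rule S0_mvec)
  have dv: "dotp p v v > 0" using dotp_sq_le[OF i(1), of v] i(2)
    by (smt (verit) zero_less_power2)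
  have nn: "\<And>j. j \<in> {..<p} \<Longrightarrow> 0 \<le> (1 / sqrt (lam j) * dotp p (w j) v) * dotp p (w j) v"
    using lp by (simp add: mult.assoc)  (metis divide_nonneg_pos lessThan_iff real_sqrt_gt_zero zero_le_square)
  show "quad p (S0 p w lam) v > 0"
  proof (rule ccontr)
    assume "\<not> quad p (S0 p w lam) v > 0"
    hence "(\<Sum>j<p. (1 / sqrt (lam j) * dotp p (w j) v) * dotp p (w j) v) = 0"
    proof -
      have "0 \<le> (\<Sum>j<p. (1 / sqrt (lam j) * dotp p (w j) v) * dotp p (w j) v)"
        by (rule sum_nonneg) (rule nn)
      thus ?thesis using q \<open>\<not> quad p (S0 p w lam) v > 0\<close> by linarith
    qed
    hence z: "\<And>j. j < p \<Longrightarrow> (1 / sqrt (lam j) * dotp p (w j) v) * dotp p (w j) v = 0"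
      using sum_nonneg_eq_0_iff[of "{..<p}" "\<lambda>j. (1 / sqrt (lam j) * dotp p (w j) v) * dotp p (w j) v"] nn by auto
    have "\<And>j. j < p \<Longrightarrow> dotp p (w j) v = 0"
    proof -
      fix j assume j: "j < p"
      have "1 / sqrt (lam j) \<noteq> 0" using lp[OF j] by simp
      thus "dotp p (w j) v = 0" using z[OF j] by simp
    qed
    hence "dotp p v v = 0" using parseval[OF o, of v] by simp
    thus False using dv by simp
  qed
qed

lemma S0_inv:
  assumes pd: "pos_def p Sig" and s: "spec p Sig w lam"
  shows "mat_eq p p (mmul p (S0 p w lam) (mmul p Sig (S0 p w lam))) idm"
proof (rule mvec_idm_mat_eq)
  fix x :: rvec and i :: nat assume i: "i < p"
  have o: "orthn p p w" using s by (simp add: spec_def)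
  have lp: "\<And>j. j < p \<Longrightarrow> lam j > 0" using spec_pos[OF pd s] by blast
  let ?S = "S0 p w lam"
  define a where "a = (\<lambda>j. 1 / sqrt (lam j))"
  define c where "c = (\<lambda>j. dotp p (w j) x)"
  have y1: "\<And>i. i < p \<Longrightarrow> mvec p ?S x i = (\<Sum>j<p. (a j * c j) * w j i)"
    unfolding a_def c_def by (rule S0_mvec)
  have y2: "mvec p Sig (mvec p ?S x) i = (\<Sum>j<p. (a j * c j * lam j) * w j i)" if "i < p" for i
  proof -
    have "mvec p Sig (mvec p ?S x) i = (\<Sum>j<p. (a j * c j) * mvec p Sig (w j) i)"
      by (rule expansion_mvec) (rule y1)
    also have "\<dots> = (\<Sum>j<p. (a j * c j * lam j) * w j i)"
      using s that unfolding spec_def by (intro sum.cong) auto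
    finally show ?thesis .
  qed
  have "mvec p (mmul p ?S (mmul p Sig ?S)) x i = mvec p ?S (mvec p Sig (mvec p ?S x)) i"
    by (simp add: mvec_mmul)
  also have "\<dots> = mvec p ?S (\<lambda>i. \<Sum>j<p. (a j * c j * lam j) * w j i) i"
    by (subst mvec_cong[of p _ "\<lambda>i. \<Sum>j<p. (a j * c j * lam j) * w j i"]) (use y2 in auto)
  also have "\<dots> = (\<Sum>j<p. (a j * (a j * c j * lam j)) * w j i)"
    using S0_mvec_exp[OF o i, of lam "\<lambda>j. a j * c j * lam j"] by (simp only: a_def)
  also have "\<dots> = (\<Sum>j<p. c j * w j i)"
  proof (intro sum.cong refl)
    fix j assume "j \<in> {..<p}"
    hence l: "lam j > 0" using lp by simp
    have "a j * a j * lam j = 1" unfolding a_def using l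
      by (simp add: field_simps)
    thus "(a j * (a j * c j * lam j)) * w j i = c j * w j i"
      by (metis (no_types, lifting) mult.commute mult.left_commute mult_1)
  qed
  also have "\<dots> = x i" unfolding c_def using orthn_complete[OF o] i by simp
  finally show "mvec p (mmul p ?S (mmul p Sig ?S)) x i = x i" .
qed


lemma S0_unique:
  assumes pd: "pos_def p Sig" and s: "spec p Sig w lam"
    and Son: "mat_on p p S" and Spd: "pos_def p S"
    and Sinv: "mat_eq p p (mmul p S (mmul p Sig S)) idm"
  shows "S = S0 p w lam"
proof -
  have o: "orthn p p w" using s by (simp add: spec_def)
  have lp: "\<And>j. j < p \<Longrightarrow> lam j > 0" using spec_pos[OF pd s] by blast
  have symSig: "sym_mat p Sig" using pd by (simp add: pos_def_def)
  have symS: "sym_mat p S" using Spd by (simp add: pos_def_def)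
  obtain z mu where sz: "spec p S z mu" using spectral[OF symS] by blast
  have oz: "orthn p p z" using sz by (simp add: spec_def)
  have mp: "\<And>k. k < p \<Longrightarrow> mu k > 0" using spec_pos[OF Spd sz] by blast
  have ident: "\<And>x i. i < p \<Longrightarrow> mvec p S (mvec p Sig (mvec p S x)) i = x i"
    using mat_eq_idm_mvec[OF Sinv] by (simp add: mvec_mmul)
  have S0z: "mvec p (S0 p w lam) (z k) i = mu k * z k i" if k: "k < p" and i: "i < p" for k i
  proof -
    have hz: "\<And>i. i < p \<Longrightarrow> mvec p S (z k) i = mu k * z k i" using sz k by (simp add: spec_def)
    define y where "y = mvec p Sig (z k)"
    have "mvec p Sig (mvec p S (z k)) = mvec p Sig (\<lambda>i. mu k * z k i)"
      by (rule mvec_cong) (rule hz)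
    also have "\<dots> = (\<lambda>j. mu k * y j)" unfolding y_def by (rule mvec_scale')
    finally have e1: "mvec p Sig (mvec p S (z k)) = (\<lambda>j. mu k * y j)" .
    have zy: "z k i = mu k * mvec p S y i" if "i < p" for i
      using ident[OF that, of "z k"] unfolding e1 mvec_scale' by simp
    define d where "d = (\<lambda>i. y i - (1 / (mu k)^2) * z k i)"
    have "mvec p S d i = 0" if "i < p" for i
    proof -
      have "mvec p S d i = mvec p S y i - (1 / (mu k)^2) * mvec p S (z k) i"
        unfolding d_def mvec_diff mvec_scale ..
      also have "\<dots> = 0" using zy[OF that] hz[OF that] mp[OF k]
        by (simp add: field_simps power2_eq_square)
      finally show ?thesis .
    qed
    hence dz: "\<And>i. i < p \<Longrightarrow> d i = 0" using pos_def_zero[OF Spd] by blast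
    define nu where "nu = 1 / (mu k)^2"
    have yz: "\<And>i. i < p \<Longrightarrow> y i = nu * z k i" using dz unfolding d_def nu_def by simp
    have cj: "1 / sqrt (lam j) * dotp p (w j) (z k) = mu k * dotp p (w j) (z k)" if j: "j < p" for j
    proof (cases "dotp p (w j) (z k) = 0")
      case True thus ?thesis by simp
    next
      case False
      have "lam j * dotp p (w j) (z k) = dotp p (\<lambda>i. lam j * w j i) (z k)"
        by (simp add: dotp_scale_left)
      also have "\<dots> = dotp p (mvec p Sig (w j)) (z k)"
        by (rule dotp_cong) (use s j in \<open>auto simp: spec_def\<close>)
      also have "\<dots> = dotp p (w j) y" unfolding y_def by (rule sym_dotp[OF symSig, symmetric])
      also have "\<dots> = dotp p (w j) (\<lambda>i. nu * z k i)" by (rule dotp_cong) (use yz in auto)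
      also have "\<dots> = nu * dotp p (w j) (z k)" by (rule dotp_scale_right)
      finally have "lam j = nu" using False by simp
      hence "sqrt (lam j) = 1 / mu k" unfolding nu_def using mp[OF k]
        by (simp add: real_sqrt_divide)
      thus ?thesis using mp[OF k] by simp
    qed
    have "mvec p (S0 p w lam) (z k) i = (\<Sum>j<p. (1 / sqrt (lam j) * dotp p (w j) (z k)) * w j i)"
      by (rule S0_mvec[OF i])
    also have "\<dots> = (\<Sum>j<p. mu k * (dotp p (w j) (z k) * w j i))"
    proof (intro sum.cong refl)
      fix j assume "j \<in> {..<p}"
      hence "1 / sqrt (lam j) * dotp p (w j) (z k) = mu k * dotp p (w j) (z k)" using cj by simp
      thus "(1 / sqrt (lam j) * dotp p (w j) (z k)) * w j i = mu k * (dotp p (w j) (z k) * w j i)"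
        by (simp only: mult.assoc)
    qed
    also have "\<dots> = mu k * z k i" using orthn_complete[OF o, rule_format, OF i, of "z k"]
      by (simp add: sum_distrib_left)
    finally show ?thesis .
  qed
  show ?thesis
  proof (rule mat_ext[OF Son S0_mat_on])
    fix x :: rvec and i assume i: "i < p"
    have "mvec p S x i = (\<Sum>k<p. (mu k * dotp p (z k) x) * z k i)"
      by (rule mvec_expand[OF sz i])
    also have "\<dots> = (\<Sum>k<p. dotp p (z k) x * mvec p (S0 p w lam) (z k) i)"
      by (intro sum.cong refl) (simp add: S0z i)
    also have "\<dots> = mvec p (S0 p w lam) x i"
      by (rule expansion_mvec[symmetric]) (rule spec_complete[OF sz])
    finally show "mvec p S x i = mvec p (S0 p w lam) x i" .
  qed
qed

lemma inv_sqrt_char: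
  assumes pd: "pos_def p Sig" and s: "spec p Sig w lam"
  shows "inv_sqrt p Sig = S0 p w lam"
  unfolding inv_sqrt_def
proof (rule the_equality)
  show "mat_on p p (S0 p w lam) \<and> pos_def p (S0 p w lam) \<and>
      mat_eq p p (mmul p (S0 p w lam) (mmul p Sig (S0 p w lam))) idm"
    using S0_mat_on S0_pos[OF pd s] S0_inv[OF pd s] by blast
  fix S assume "mat_on p p S \<and> pos_def p S \<and> mat_eq p p (mmul p S (mmul p Sig S)) idm"
  thus "S = S0 p w lam" using S0_unique[OF pd s] by blast
qed

lemma S0_preimage:
  assumes pd: "pos_def p Sig" and s: "spec p Sig w lam"
  shows "\<exists>v. (\<forall>i<p. mvec p (S0 p w lam) v i = y i) \<and> dotp p v v = quad p Sig y"
proof -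
  have o: "orthn p p w" using s by (simp add: spec_def)
  have lp: "\<And>j. j < p \<Longrightarrow> lam j > 0" using spec_pos[OF pd s] by blast
  define v where "v = (\<lambda>i. \<Sum>j<p. (sqrt (lam j) * dotp p (w j) y) * w j i)"
  have 1: "mvec p (S0 p w lam) v i = y i" if i: "i < p" for i
  proof -
    have "mvec p (S0 p w lam) v i = (\<Sum>j<p. (1 / sqrt (lam j) * (sqrt (lam j) * dotp p (w j) y)) * w j i)"
      unfolding v_def by (rule S0_mvec_exp[OF o i])
    also have "\<dots> = (\<Sum>j<p. dotp p (w j) y * w j i)"
    proof (intro sum.cong refl)
      fix j assume "j \<in> {..<p}"
      hence "sqrt (lam j) > 0" using lp by simp
      thus "(1 / sqrt (lam j) * (sqrt (lam j) * dotp p (w j) y)) * w j i = dotp p (w j) y * w j i"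
        by simp
    qed
    also have "\<dots> = y i" using orthn_complete[OF o] i by simp
    finally show ?thesis .
  qed
  have "dotp p v v = (\<Sum>j<p. (dotp p (w j) v)\<^sup>2)" by (rule parseval[OF o])
  also have "\<dots> = (\<Sum>j<p. (sqrt (lam j) * dotp p (w j) y)\<^sup>2)"
    unfolding v_def by (intro sum.cong refl) (simp add: orthn_expand[OF o])
  also have "\<dots> = (\<Sum>j<p. lam j * (dotp p (w j) y)\<^sup>2)"
  proof (intro sum.cong refl)
    fix j assume "j \<in> {..<p}"
    hence "lam j > 0" using lp by simp
    thus "(sqrt (lam j) * dotp p (w j) y)\<^sup>2 = lam j * (dotp p (w j) y)\<^sup>2"
      by (simp add: power_mult_distrib)
  qed
  also have "\<dots> = quad p Sig y" by (rule spec_quad[OF s, symmetric])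
  finally show ?thesis using 1 by blast
qed

lemma lambda_min_bound:
  assumes sym: "sym_mat p G" and p: "p \<ge> 1" and lm: "lambda_min p G \<ge> c"
  shows "quad p G v \<ge> c * dotp p v v"
proof -
  obtain w lam where s: "spec p G w lam" using spectral[OF sym] by blast
  have o: "orthn p p w" using s by (simp add: spec_def)
  define m where "m = Min (lam ` {..<p})"
  have "0 \<in> {..<p}" using p by simp
  hence fin: "finite (lam ` {..<p})" and ne: "lam ` {..<p} \<noteq> {}" by auto
  have mle: "\<And>j. j < p \<Longrightarrow> m \<le> lam j" unfolding m_def using fin by auto
  have qlow: "quad p G x \<ge> m * dotp p x x" for x
  proof -
    have "m * dotp p x x = (\<Sum>j<p. m * (dotp p (w j) x)\<^sup>2)"
      by (simp add: parseval[OF o] sum_distrib_left)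
    also have "\<dots> \<le> (\<Sum>j<p. lam j * (dotp p (w j) x)\<^sup>2)"
      by (intro sum_mono mult_right_mono) (auto simp: mle)
    also have "\<dots> = quad p G x" by (rule spec_quad[OF s, symmetric])
    finally show ?thesis .
  qed
  have bdd: "bdd_below {l. is_eigenvalue p G l}"
  proof (rule bdd_belowI)
    fix l assume "l \<in> {l. is_eigenvalue p G l}"
    then obtain x where x: "\<exists>i<p. x i \<noteq> 0" "\<forall>i<p. mvec p G x i = l * x i"
      unfolding is_eigenvalue_def by blast
    then obtain i where i: "i < p" "x i \<noteq> 0" by blast
    have dx: "dotp p x x > 0" using dotp_sq_le[OF i(1), of x] i(2)
      by (smt (verit) zero_less_power2)
    have "quad p G x = dotp p x (\<lambda>i. l * x i)"
      unfolding quad_dotp by (rule dotp_cong) (use x in auto)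
    also have "\<dots> = l * dotp p x x" by (rule dotp_scale_right)
    finally have "l * dotp p x x \<ge> m * dotp p x x" using qlow[of x] by simp
    thus "m \<le> l" using dx by simp
  qed
  have ev: "is_eigenvalue p G (lam j)" if "j < p" for j
    unfolding is_eigenvalue_def using orthn_nz[OF o that] s that by (auto simp: spec_def)
  have clam: "c \<le> lam j" if "j < p" for j
  proof -
    have "lambda_min p G \<le> lam j" unfolding lambda_min_def
      by (rule cInf_lower) (use ev[OF that] bdd in auto)
    thus ?thesis using lm by simp
  qed
  have "c * dotp p v v = (\<Sum>j<p. c * (dotp p (w j) v)\<^sup>2)"
    by (simp add: parseval[OF o] sum_distrib_left)
  also have "\<dots> \<le> (\<Sum>j<p. lam j * (dotp p (w j) v)\<^sup>2)"
    by (intro sum_mono mult_right_mono) (auto simp: clam)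
  also have "\<dots> = quad p G v" by (rule spec_quad[OF s, symmetric])
  finally show ?thesis .
qed


lemma upd_mvec: "b < K \<Longrightarrow> mvec K Q (u(b := u b + s)) k = mvec K Q u k + s * Q k b"
proof -
  assume b: "b < K"
  have "mvec K Q (u(b := u b + s)) k = (\<Sum>l<K. Q k l * u l + (if l = b then s * Q k b else 0))"
    unfolding mvec_def by (intro sum.cong) (auto simp: algebra_simps)
  also have "\<dots> = mvec K Q u k + s * Q k b" using b by (simp add: sum.distrib mvec_def)
  finally show ?thesis .
qed

lemma sum_exp_deriv:
  "((\<lambda>s. \<Sum>k<m. exp (z k + s * q k) * c k) has_real_derivative (\<Sum>k<m. exp (z k) * q k * c k)) (at 0)"
  by (rule DERIV_sum) (auto intro!: derivative_eq_intros)

definition F1 :: "nat \<Rightarrow> rmat \<Rightarrow> rvec \<Rightarrow> rvec \<Rightarrow> nat \<Rightarrow> real" where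
  "F1 K Q y u b = - (\<Sum>k<K+1. y k * Q k b) +
     (\<Sum>k<K+1. exp (mvec K Q u k) * Q k b) / (\<Sum>k<K+1. exp (mvec K Q u k))"

lemma partial_f:
  assumes b: "b < K"
  shows "partial (\<lambda>u. mlloss (K+1) y (mvec K Q u)) b u = F1 K Q y u b"
proof -
  define z where "z = mvec K Q u"
  have fe: "(\<lambda>s. mlloss (K+1) y (mvec K Q (u(b := u b + s)))) =
     (\<lambda>s. - (\<Sum>k<K+1. y k * (z k + s * Q k b)) + ln (\<Sum>k<K+1. exp (z k + s * Q k b) * 1))"
    unfolding mlloss_def z_def by (simp add: upd_mvec[OF b])
  have D: "(\<Sum>k<K+1. exp (z k)) > 0" by (intro sum_pos) auto
  have "((\<lambda>s. - (\<Sum>k<K+1. y k * (z k + s * Q k b)) + ln (\<Sum>k<K+1. exp (z k + s * Q k b) * 1))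
     has_real_derivative F1 K Q y u b) (at 0)"
  proof -
    have d1: "((\<lambda>s. \<Sum>k<K+1. y k * (z k + s * Q k b)) has_real_derivative (\<Sum>k<K+1. y k * Q k b)) (at 0)"
      by (rule DERIV_sum) (auto intro!: derivative_eq_intros)
    have d2: "((\<lambda>s. ln (\<Sum>k<K+1. exp (z k + s * Q k b) * 1)) has_real_derivative
        1 / (\<Sum>k<K+1. exp (z k + 0 * Q k b) * 1) * (\<Sum>k<K+1. exp (z k) * Q k b * 1)) (at 0)"
      by (rule DERIV_chain2[OF DERIV_ln_divide sum_exp_deriv]) (use D in simp)
    show ?thesis using DERIV_add[OF DERIV_minus[OF d1] d2] unfolding F1_def z_def by simp
  qed
  thus ?thesis unfolding partial_def fe by (rule DERIV_imp_deriv)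
qed


definition H2 :: "nat \<Rightarrow> rmat \<Rightarrow> rvec \<Rightarrow> rmat" where
  "H2 K Q u = (\<lambda>a b.
     ((\<Sum>k<K+1. exp (mvec K Q u k) * Q k a * Q k b) * (\<Sum>k<K+1. exp (mvec K Q u k))
      - (\<Sum>k<K+1. exp (mvec K Q u k) * Q k b) * (\<Sum>k<K+1. exp (mvec K Q u k) * Q k a))
     / ((\<Sum>k<K+1. exp (mvec K Q u k)) * (\<Sum>k<K+1. exp (mvec K Q u k))))"

lemma hess_f:
  assumes a: "a < K" and b: "b < K"
  shows "hessian (\<lambda>u. mlloss (K+1) y (mvec K Q u)) u0 a b = H2 K Q u0 a b"
proof -
  have pf: "(\<lambda>v. partial (\<lambda>u. mlloss (K+1) y (mvec K Q u)) b v) = (\<lambda>v. F1 K Q y v b)"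
    using partial_f[OF b] by (intro ext) simp
  define z where "z = mvec K Q u0"
  have fe: "(\<lambda>s. F1 K Q y (u0(a := u0 a + s)) b) =
     (\<lambda>s. - (\<Sum>k<K+1. y k * Q k b) +
        (\<Sum>k<K+1. exp (z k + s * Q k a) * Q k b) / (\<Sum>k<K+1. exp (z k + s * Q k a) * 1))"
    unfolding F1_def z_def by (simp add: upd_mvec[OF a])
  have "(\<Sum>k<K+1. exp (z k + 0 * Q k a) * 1) > 0" by (intro sum_pos) auto
  hence D: "(\<Sum>k<K+1. exp (z k + 0 * Q k a) * 1) \<noteq> 0" by linarith
  have dq: "((\<lambda>s. (\<Sum>k<K+1. exp (z k + s * Q k a) * Q k b) / (\<Sum>k<K+1. exp (z k + s * Q k a) * 1))
     has_real_derivative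
       ((\<Sum>k<K+1. exp (z k) * Q k a * Q k b) * (\<Sum>k<K+1. exp (z k + 0 * Q k a) * 1)
        - (\<Sum>k<K+1. exp (z k + 0 * Q k a) * Q k b) * (\<Sum>k<K+1. exp (z k) * Q k a * 1))
       / ((\<Sum>k<K+1. exp (z k + 0 * Q k a) * 1) * (\<Sum>k<K+1. exp (z k + 0 * Q k a) * 1))) (at 0)"
    by (rule DERIV_divide[OF sum_exp_deriv sum_exp_deriv D])
  have "((\<lambda>s. F1 K Q y (u0(a := u0 a + s)) b) has_real_derivative H2 K Q u0 a b) (at 0)"
    unfolding fe using DERIV_add[OF DERIV_const dq] unfolding H2_def z_def by simp
  hence "deriv (\<lambda>s. F1 K Q y (u0(a := u0 a + s)) b) 0 = H2 K Q u0 a b" by (rule DERIV_imp_deriv)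
  moreover have "hessian (\<lambda>u. mlloss (K+1) y (mvec K Q u)) u0 a b = partial (\<lambda>v. F1 K Q y v b) a u0"
    by (simp only: hessian_def pf)
  moreover have "partial (\<lambda>v. F1 K Q y v b) a u0 = deriv (\<lambda>s. F1 K Q y (u0(a := u0 a + s)) b) 0"
    by (simp only: partial_def)
  ultimately show ?thesis by simp
qed


lemma sum_sq_expand:
  fixes f :: "nat \<Rightarrow> real"
  shows "(\<Sum>a<K. f a) * (\<Sum>b<K. g b) = (\<Sum>a<K. \<Sum>b<K. f a * g b)"
  by (simp add: sum_product)

lemma quad_H2_sum1:
  fixes E w :: rvec and Q :: rmat
  shows "(\<Sum>a<K. \<Sum>b<K. w a * w b * (\<Sum>k<m. E k * Q k a * Q k b))
       = (\<Sum>k<m. E k * (\<Sum>a<K. Q k a * w a)^2)"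
proof -
  have "(\<Sum>k<m. E k * (\<Sum>a<K. Q k a * w a)^2) = (\<Sum>k<m. \<Sum>a<K. \<Sum>b<K. E k * Q k a * Q k b * w a * w b)"
    by (simp add: power2_eq_square sum_product sum_distrib_left mult_ac)
  also have "\<dots> = (\<Sum>a<K. \<Sum>k<m. \<Sum>b<K. E k * Q k a * Q k b * w a * w b)" by (rule sum.swap)
  also have "\<dots> = (\<Sum>a<K. \<Sum>b<K. \<Sum>k<m. E k * Q k a * Q k b * w a * w b)"
  proof (rule sum.cong[OF refl])
    fix a show "(\<Sum>k<m. \<Sum>b<K. E k * Q k a * Q k b * w a * w b) = (\<Sum>b<K. \<Sum>k<m. E k * Q k a * Q k b * w a * w b)"
      by (rule sum.swap)
  qed
  also have "\<dots> = (\<Sum>a<K. \<Sum>b<K. w a * w b * (\<Sum>k<m. E k * Q k a * Q k b))"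
    by (simp add: sum_distrib_left mult_ac)
  finally show ?thesis by simp
qed

lemma quad_H2_sum2:
  fixes E w :: rvec and Q :: rmat
  shows "(\<Sum>a<K. w a * (\<Sum>k<m. E k * Q k a)) = (\<Sum>k<m. E k * (\<Sum>a<K. Q k a * w a))"
proof -
  have "(\<Sum>a<K. w a * (\<Sum>k<m. E k * Q k a)) = (\<Sum>a<K. \<Sum>k<m. E k * Q k a * w a)"
    by (simp add: sum_distrib_left mult_ac)
  also have "\<dots> = (\<Sum>k<m. \<Sum>a<K. E k * Q k a * w a)" by (rule sum.swap)
  also have "\<dots> = (\<Sum>k<m. E k * (\<Sum>a<K. Q k a * w a))" by (simp add: sum_distrib_left mult_ac)
  finally show ?thesis .
qed

lemma quad_H2:
  fixes K :: nat and Q :: rmat and u w :: rvec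
  defines "E \<equiv> (\<lambda>k. exp (mvec K Q u k))"
  shows "quad K (H2 K Q u) w =
    ((\<Sum>k<K+1. E k * (\<Sum>a<K. Q k a * w a)^2) * (\<Sum>k<K+1. E k)
     - (\<Sum>k<K+1. E k * (\<Sum>a<K. Q k a * w a))^2) / ((\<Sum>k<K+1. E k) * (\<Sum>k<K+1. E k))"
proof -
  define Dn where "Dn = (\<Sum>k<K+1. E k)"
  define T where "T = (\<lambda>a b. \<Sum>k<K+1. E k * Q k a * Q k b)"
  define N where "N = (\<lambda>a. \<Sum>k<K+1. E k * Q k a)"
  have H: "H2 K Q u = (\<lambda>a b. (T a b * Dn - N b * N a) / (Dn * Dn))"
    unfolding H2_def T_def N_def Dn_def E_def ..
  have "quad K (H2 K Q u) w = (\<Sum>a<K. \<Sum>b<K. (w a * w b * T a b * Dn - (w a * N a) * (w b * N b)) / (Dn * Dn))"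
    unfolding quad_def H by (intro sum.cong refl) (simp add: field_simps)
  also have "\<dots> = ((\<Sum>a<K. \<Sum>b<K. w a * w b * T a b) * Dn - (\<Sum>a<K. \<Sum>b<K. (w a * N a) * (w b * N b))) / (Dn * Dn)"
    by (simp add: sum_divide_distrib[symmetric] sum_subtractf sum_distrib_right)
  also have "(\<Sum>a<K. \<Sum>b<K. (w a * N a) * (w b * N b)) = (\<Sum>a<K. w a * N a) * (\<Sum>b<K. w b * N b)"
    by (simp add: sum_product)
  also have "(\<Sum>a<K. \<Sum>b<K. w a * w b * T a b) = (\<Sum>k<K+1. E k * (\<Sum>a<K. Q k a * w a)^2)"
    unfolding T_def by (rule quad_H2_sum1)
  also have "(\<Sum>a<K. w a * N a) = (\<Sum>k<K+1. E k * (\<Sum>a<K. Q k a * w a))"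
    unfolding N_def by (rule quad_H2_sum2)
  finally show ?thesis unfolding Dn_def by (simp add: power2_eq_square)
qed

lemma var_identity:
  fixes E g :: "nat \<Rightarrow> real"
  shows "(\<Sum>k<m. \<Sum>l<m. E k * E l * (g k - g l)^2) =
     2 * ((\<Sum>k<m. E k * (g k)^2) * (\<Sum>k<m. E k) - (\<Sum>k<m. E k * g k)^2)"
proof -
  have 1: "(\<Sum>k<m. \<Sum>l<m. E k * E l * (g k - g l)^2) =
      (\<Sum>k<m. \<Sum>l<m. E k * (g k)^2 * E l) + (\<Sum>k<m. \<Sum>l<m. E l * (g l)^2 * E k)
      - 2 * (\<Sum>k<m. \<Sum>l<m. (E k * g k) * (E l * g l))"
    by (simp add: power2_diff sum.distrib sum_subtractf sum_distrib_left algebra_simps)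
  have 2: "(\<Sum>k<m. \<Sum>l<m. E l * (g l)^2 * E k) = (\<Sum>l<m. \<Sum>k<m. E l * (g l)^2 * E k)"
    by (rule sum.swap)
  have 3: "(\<Sum>l<m. \<Sum>k<m. E l * (g l)^2 * E k) = (\<Sum>k<m. E k * (g k)^2) * (\<Sum>k<m. E k)"
    by (simp add: sum_product)
  have 4: "(\<Sum>k<m. \<Sum>l<m. E k * (g k)^2 * E l) = (\<Sum>k<m. E k * (g k)^2) * (\<Sum>k<m. E k)"
    by (simp add: sum_product)
  have 5: "(\<Sum>k<m. \<Sum>l<m. (E k * g k) * (E l * g l)) = (\<Sum>k<m. E k * g k)^2"
    by (simp add: sum_product power2_eq_square)
  show ?thesis unfolding 1 2 3 4 5 by simp
qed


lemma H2_nonneg: "quad K (H2 K Q u) w \<ge> 0"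
proof -
  define E where "E = (\<lambda>k. exp (mvec K Q u k))"
  define g where "g = (\<lambda>k. \<Sum>a<K. Q k a * w a)"
  have "2 * ((\<Sum>k<K+1. E k * (g k)^2) * (\<Sum>k<K+1. E k) - (\<Sum>k<K+1. E k * g k)^2) \<ge> 0"
    unfolding var_identity[symmetric] by (intro sum_nonneg) (auto simp: E_def)
  hence "((\<Sum>k<K+1. E k * (g k)^2) * (\<Sum>k<K+1. E k) - (\<Sum>k<K+1. E k * g k)^2) /
      ((\<Sum>k<K+1. E k) * (\<Sum>k<K+1. E k)) \<ge> 0" by simp
  thus ?thesis unfolding quad_H2 E_def g_def .
qed

lemma H2_bound:
  fixes K :: nat and Q :: rmat and u w :: rvec and R :: real
  assumes QtQ: "mat_eq K K (mmul (K+1) (transp Q) Q) idm"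
    and cs: "\<And>a. a < K \<Longrightarrow> (\<Sum>k<K+1. Q k a) = 0"
    and zb: "\<And>k. k < K+1 \<Longrightarrow> \<bar>mvec K Q u k\<bar> \<le> R"
  shows "quad K (H2 K Q u) w \<ge> exp (-4*R) / real (K+1) * (\<Sum>a<K. (w a)^2)"
proof -
  define E where "E = (\<lambda>k. exp (mvec K Q u k))"
  define g where "g = (\<lambda>k. \<Sum>a<K. Q k a * w a)"
  define m where "m = K + 1"
  define e1 where "e1 = exp (- R)"
  define e2 where "e2 = exp R"
  have Elo: "E k \<ge> e1" if "k < m" for k
    unfolding E_def e1_def using zb[of k] that m_def by auto
  have Ehi: "E k \<le> e2" if "k < m" for k
    unfolding E_def e2_def using zb[of k] that m_def by auto
  have e1p: "e1 > 0" unfolding e1_def by simp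
  have gs: "(\<Sum>k<m. g k) = 0"
  proof -
    have "(\<Sum>k<m. g k) = (\<Sum>a<K. \<Sum>k<m. Q k a * w a)" unfolding g_def by (rule sum.swap)
    also have "\<dots> = (\<Sum>a<K. w a * (\<Sum>k<m. Q k a))" by (simp add: sum_distrib_left mult_ac)
    also have "\<dots> = 0" using cs unfolding m_def by simp
    finally show ?thesis .
  qed
  have gw: "(\<Sum>k<m. (g k)^2) = (\<Sum>a<K. (w a)^2)"
  proof -
    have "(\<Sum>k<m. (g k)^2) = (\<Sum>k<m. (\<lambda>_. 1) k * (\<Sum>a<K. Q k a * w a)^2)" unfolding g_def by simp
    also have "\<dots> = (\<Sum>a<K. \<Sum>b<K. w a * w b * (\<Sum>k<m. (\<lambda>_. 1) k * Q k a * Q k b))"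
      by (rule quad_H2_sum1[symmetric])
    also have "\<dots> = (\<Sum>a<K. \<Sum>b<K. w a * w b * idm a b)"
    proof (intro sum.cong refl)
      fix a b assume "a \<in> {..<K}" "b \<in> {..<K}"
      hence "mmul (K+1) (transp Q) Q a b = idm a b" using QtQ unfolding mat_eq_def by auto
      thus "w a * w b * (\<Sum>k<m. (\<lambda>_. 1) k * Q k a * Q k b) = w a * w b * idm a b"
        unfolding mmul_def transp_def m_def by simp
    qed
    also have "\<dots> = (\<Sum>a<K. (w a)^2)"
    proof (rule sum.cong[OF refl])
      fix a assume "a \<in> {..<K}"
      have "(\<Sum>b<K. w a * w b * idm a b) = (\<Sum>b<K. if b = a then w a * w a else 0)"
        by (intro sum.cong refl) (auto simp: idm_def)
      thus "(\<Sum>b<K. w a * w b * idm a b) = (w a)^2" using \<open>a \<in> {..<K}\<close> by (simp add: power2_eq_square)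
    qed
    finally show ?thesis .
  qed
  define num where "num = (\<Sum>k<m. E k * (g k)^2) * (\<Sum>k<m. E k) - (\<Sum>k<m. E k * g k)^2"
  define D where "D = (\<Sum>k<m. E k)"
  have "2 * num = (\<Sum>k<m. \<Sum>l<m. E k * E l * (g k - g l)^2)" unfolding num_def by (rule var_identity[symmetric])
  also have "\<dots> \<ge> (\<Sum>k<m. \<Sum>l<m. e1^2 * ((\<lambda>_. 1) k * (\<lambda>_. 1) l * (g k - g l)^2))"
  proof (intro sum_mono)
    fix k l assume "k \<in> {..<m}" "l \<in> {..<m}"
    hence "E k * E l \<ge> e1 * e1" using Elo e1p by (intro mult_mono) (auto simp: E_def)
    thus "e1^2 * ((\<lambda>_. 1) k * (\<lambda>_. 1) l * (g k - g l)^2) \<le> E k * E l * (g k - g l)^2"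
      by (simp add: power2_eq_square mult_right_mono)
  qed
  also have "(\<Sum>k<m. \<Sum>l<m. e1^2 * ((\<lambda>_. 1) k * (\<lambda>_. 1) l * (g k - g l)^2))
      = e1^2 * (\<Sum>k<m. \<Sum>l<m. (\<lambda>_. 1) k * (\<lambda>_. 1) l * (g k - g l)^2)"
    by (simp add: sum_distrib_left)
  also have "(\<Sum>k<m. \<Sum>l<m. (\<lambda>_. 1) k * (\<lambda>_. 1) l * (g k - g l)^2) = 2 * ((\<Sum>k<m. (g k)^2) * real m)"
    using var_identity[of "\<lambda>_. 1" g m] gs by simp
  finally have numlo: "num \<ge> e1^2 * real m * (\<Sum>k<m. (g k)^2)" by (simp add: mult_ac)
  have Dpos: "D > 0" unfolding D_def m_def E_def by (intro sum_pos) auto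
  have Dhi: "D \<le> real m * e2"
  proof -
    have "D \<le> (\<Sum>k<m. e2)" unfolding D_def by (intro sum_mono) (auto intro: Ehi)
    thus ?thesis by simp
  qed
  have mpos: "real m > 0" unfolding m_def by simp
  have e2p: "e2 > 0" unfolding e2_def by simp
  have S0: "(\<Sum>k<m. (g k)^2) \<ge> 0" by (intro sum_nonneg) auto
  have "quad K (H2 K Q u) w = num / (D * D)"
    unfolding quad_H2 num_def D_def E_def g_def m_def ..
  also have "num / (D * D) \<ge> (e1^2 * real m * (\<Sum>k<m. (g k)^2)) / ((real m * e2) * (real m * e2))"
  proof (rule frac_le)
    have "0 \<le> e1^2 * real m * (\<Sum>k<m. (g k)^2)" using S0 by simp
    thus "0 \<le> num" using numlo by linarith
    show "e1^2 * real m * (\<Sum>k<m. (g k)^2) \<le> num" by (rule numlo)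
    show "0 < D * D" using Dpos by simp
    show "D * D \<le> real m * e2 * (real m * e2)" using Dpos Dhi by (intro mult_mono) auto
  qed
  also have "(e1^2 * real m * (\<Sum>k<m. (g k)^2)) / ((real m * e2) * (real m * e2))
      = (e1 / e2)^2 / real m * (\<Sum>k<m. (g k)^2)"
    using mpos e2p by (simp add: field_simps power2_eq_square)
  also have "(e1 / e2)^2 = exp (-4 * R)"
    unfolding e1_def e2_def by (simp add: exp_diff[symmetric] power2_eq_square exp_add[symmetric])
  finally have "exp (-4 * R) / real m * (\<Sum>k<m. (g k)^2) \<le> quad K (H2 K Q u) w" .
  hence "exp (-4 * R) / real m * (\<Sum>a<K. (w a)^2) \<le> quad K (H2 K Q u) w" by (simp only: gw)
  thus ?thesis unfolding m_def by simp
qed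

lemma divmod_lin: "t < p \<Longrightarrow> (t + a * p) div p = a \<and> (t + a * p) mod p = (t::nat)"
  by simp

lemma kron_quad_gen:
  "quad (K * p) (kron p A B) v =
   (\<Sum>a<K. \<Sum>b<K. A a b * (\<Sum>t<p. \<Sum>t'<p. v (t + a * p) * B t t' * v (t' + b * p)))"
proof -
  have "quad (K * p) (kron p A B) v =
     (\<Sum>a<K. \<Sum>t<p. \<Sum>b<K. \<Sum>t'<p. v (t + a * p) * kron p A B (t + a * p) (t' + b * p) * v (t' + b * p))"
    unfolding quad_def sum_mult_product ..
  also have "\<dots> = (\<Sum>a<K. \<Sum>t<p. \<Sum>b<K. \<Sum>t'<p. A a b * (v (t + a * p) * B t t' * v (t' + b * p)))"
    by (intro sum.cong refl) (simp add: kron_def mult_ac)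
  also have "\<dots> = (\<Sum>a<K. \<Sum>b<K. \<Sum>t<p. \<Sum>t'<p. A a b * (v (t + a * p) * B t t' * v (t' + b * p)))"
  proof (rule sum.cong[OF refl])
    fix a show "(\<Sum>t<p. \<Sum>b<K. \<Sum>t'<p. A a b * (v (t + a * p) * B t t' * v (t' + b * p))) =
                (\<Sum>b<K. \<Sum>t<p. \<Sum>t'<p. A a b * (v (t + a * p) * B t t' * v (t' + b * p)))"
      by (rule sum.swap)
  qed
  also have "\<dots> = (\<Sum>a<K. \<Sum>b<K. A a b * (\<Sum>t<p. \<Sum>t'<p. v (t + a * p) * B t t' * v (t' + b * p)))"
    by (simp add: sum_distrib_left)
  finally show ?thesis .
qed

lemma kron_quad_rank1:
  "quad (K * p) (kron p H (\<lambda>a b. x a * x b)) v =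
   quad K H (\<lambda>a. \<Sum>t<p. v (t + a * p) * x t)"
proof -
  have "quad (K * p) (kron p H (\<lambda>a b. x a * x b)) v =
   (\<Sum>a<K. \<Sum>b<K. H a b * (\<Sum>t<p. \<Sum>t'<p. v (t + a * p) * (x t * x t') * v (t' + b * p)))"
    by (rule kron_quad_gen)
  also have "\<dots> = quad K H (\<lambda>a. \<Sum>t<p. v (t + a * p) * x t)"
    unfolding quad_def by (intro sum.cong refl) (simp add: sum_product mult_ac)
  finally show ?thesis .
qed

lemma kron_quad_idm:
  "quad (K * p) (kron p idm Sig) v = (\<Sum>a<K. quad p Sig (\<lambda>t. v (t + a * p)))"
  unfolding kron_quad_gen
proof (rule sum.cong[OF refl])
  fix a assume a: "a \<in> {..<K}"
  have "(\<Sum>b<K. idm a b * (\<Sum>t<p. \<Sum>t'<p. v (t + a * p) * Sig t t' * v (t' + b * p))) =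
        (\<Sum>b<K. if b = a then (\<Sum>t<p. \<Sum>t'<p. v (t + a * p) * Sig t t' * v (t' + a * p)) else 0)"
    by (intro sum.cong refl) (auto simp: idm_def)
  also have "\<dots> = quad p Sig (\<lambda>t. v (t + a * p))" using a by (simp add: quad_def)
  finally show "(\<Sum>b<K. idm a b * (\<Sum>t<p. \<Sum>t'<p. v (t + a * p) * Sig t t' * v (t' + b * p))) =
        quad p Sig (\<lambda>t. v (t + a * p))" .
qed

lemma quad_msub: "quad n (msub A B) v = quad n A v - quad n B v"
  unfolding quad_def msub_def by (simp add: sum_subtractf algebra_simps)

lemma quad_mscale: "quad n (mscale c A) v = c * quad n A v"
  unfolding quad_def mscale_def by (simp add: sum_distrib_left mult_ac)

lemma quad_msum: "quad n (\<lambda>r s. \<Sum>i<m. A i r s) v = (\<Sum>i<m. quad n (A i) v)"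
proof -
  have "quad n (\<lambda>r s. \<Sum>i<m. A i r s) v = (\<Sum>r<n. \<Sum>s<n. \<Sum>i<m. v r * A i r s * v s)"
    unfolding quad_def by (simp add: sum_distrib_left sum_distrib_right)
  also have "\<dots> = (\<Sum>r<n. \<Sum>i<m. \<Sum>s<n. v r * A i r s * v s)"
    by (rule sum.cong[OF refl]) (rule sum.swap)
  also have "\<dots> = (\<Sum>i<m. \<Sum>r<n. \<Sum>s<n. v r * A i r s * v s)" by (rule sum.swap)
  finally show ?thesis unfolding quad_def .
qed

lemma quad_cong_mat: "(\<And>a b. a < n \<Longrightarrow> b < n \<Longrightarrow> A a b = B a b) \<Longrightarrow> quad n A v = quad n B v"
  unfolding quad_def by (intro sum.cong refl) auto

lemma colsum_zero:
  assumes QQ: "mat_eq (K+1) (K+1) (mmul K Q (transp Q)) (centering (K+1))" and a: "a < K"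
  shows "(\<Sum>k<K+1. Q k a) = 0"
proof -
  have "(\<Sum>b<K. (\<Sum>k<K+1. Q k b)^2) = (\<Sum>k<K+1. \<Sum>l<K+1. \<Sum>b<K. Q k b * Q l b)"
  proof -
    have "(\<Sum>b<K. (\<Sum>k<K+1. Q k b)^2) = (\<Sum>b<K. \<Sum>k<K+1. \<Sum>l<K+1. Q k b * Q l b)"
      by (simp add: power2_eq_square sum_product del: sum.lessThan_Suc)
    also have "\<dots> = (\<Sum>k<K+1. \<Sum>b<K. \<Sum>l<K+1. Q k b * Q l b)" by (rule sum.swap)
    also have "\<dots> = (\<Sum>k<K+1. \<Sum>l<K+1. \<Sum>b<K. Q k b * Q l b)"
      by (rule sum.cong[OF refl]) (rule sum.swap)
    finally show ?thesis .
  qed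
  also have "\<dots> = (\<Sum>k<K+1. \<Sum>l<K+1. centering (K+1) k l)"
    using QQ unfolding mat_eq_def mmul_def transp_def by (intro sum.cong refl) auto
  also have "\<dots> = (\<Sum>k<K+1. 1 - real (K+1) * (1 / real (K+1)))"
  proof (rule sum.cong[OF refl])
    fix k assume k: "k \<in> {..<K+1}"
    have "(\<Sum>l<K+1. centering (K+1) k l) = (\<Sum>l<K+1. idm k l) - (\<Sum>l<K+1. 1 / real (K+1))"
      unfolding centering_def by (simp add: sum_subtractf)
    also have "(\<Sum>l<K+1. idm k l) = 1"
    proof -
      have "(\<Sum>l<K+1. idm k l) = (\<Sum>l<K+1. if l = k then 1 else 0)"
        by (intro sum.cong refl) (auto simp: idm_def)
      thus ?thesis using k by simp
    qed
    finally show "(\<Sum>l<K+1. centering (K+1) k l) = 1 - real (K+1) * (1 / real (K+1))" by simp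
  qed
  also have "\<dots> = 0" by simp
  finally have "(\<Sum>b<K. (\<Sum>k<K+1. Q k b)^2) = 0" .
  hence "(\<Sum>k<K+1. Q k a)^2 = 0" using a by (subst (asm) sum_nonneg_eq_0_iff) auto
  thus ?thesis by simp
qed

lemma zlink:
  assumes QQ: "mat_eq (K+1) (K+1) (mmul K Q (transp Q)) (centering (K+1))" and k: "k < K+1"
  shows "mvec K Q (mvec p (transp (mmul (K+1) Bm Q)) x) k =
         (\<Sum>m<K+1. (\<Sum>r<p. x r * Bm r m) * centering (K+1) m k)"
proof -
  have "mvec K Q (mvec p (transp (mmul (K+1) Bm Q)) x) k =
      (\<Sum>l<K. \<Sum>r<p. \<Sum>m<K+1. Q k l * Bm r m * Q m l * x r)"
    unfolding mvec_def transp_def mmul_def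
    by (simp add: sum_distrib_left sum_distrib_right mult_ac del: sum.lessThan_Suc)
  also have "\<dots> = (\<Sum>l<K. \<Sum>m<K+1. \<Sum>r<p. Q k l * Bm r m * Q m l * x r)"
    by (rule sum.cong[OF refl]) (rule sum.swap)
  also have "\<dots> = (\<Sum>m<K+1. \<Sum>l<K. \<Sum>r<p. Q k l * Bm r m * Q m l * x r)" by (rule sum.swap)
  also have "\<dots> = (\<Sum>m<K+1. (\<Sum>l<K. Q k l * Q m l) * (\<Sum>r<p. x r * Bm r m))"
    by (simp add: sum_distrib_left sum_distrib_right mult_ac del: sum.lessThan_Suc)
  also have "\<dots> = (\<Sum>m<K+1. (\<Sum>r<p. x r * Bm r m) * centering (K+1) m k)"
  proof (rule sum.cong[OF refl])
    fix m assume m: "m \<in> {..<K+1}"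
    have "(\<Sum>l<K. Q k l * Q m l) = centering (K+1) k m"
      using QQ k m unfolding mat_eq_def mmul_def transp_def by auto
    also have "\<dots> = centering (K+1) m k" unfolding centering_def idm_def by auto
    finally show "(\<Sum>l<K. Q k l * Q m l) * (\<Sum>r<p. x r * Bm r m) = (\<Sum>r<p. x r * Bm r m) * centering (K+1) m k"
      by simp
  qed
  finally show ?thesis .
qed


lemma mvec_mmul_gen: "mvec q (mmul m A B) v = mvec m A (mvec q B v)"
proof (rule ext)
  fix i
  have "mvec q (mmul m A B) v i = (\<Sum>k<q. \<Sum>l<m. A i l * B l k * v k)"
    unfolding mvec_def mmul_def by (simp add: sum_distrib_right)
  also have "\<dots> = (\<Sum>l<m. \<Sum>k<q. A i l * B l k * v k)" by (rule sum.swap)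
  also have "\<dots> = mvec m A (mvec q B v) i"
    unfolding mvec_def by (simp add: sum_distrib_left mult.assoc)
  finally show "mvec q (mmul m A B) v i = mvec m A (mvec q B v) i" .
qed

lemma mvec_mscale: "mvec q (mscale c A) v = (\<lambda>i. c * mvec q A v i)"
  unfolding mvec_def mscale_def by (simp add: sum_distrib_left mult_ac)

lemma projI_mvec: "j < n \<Longrightarrow> mvec n (projI I) a j = (if j \<in> I then a j else 0)"
proof -
  assume j: "j < n"
  have "mvec n (projI I) a j = (\<Sum>k<n. if k = j then (if j \<in> I then a j else 0) else 0)"
    unfolding mvec_def projI_def by (intro sum.cong refl) auto
  also have "\<dots> = (if j \<in> I then a j else 0)" using j by simp
  finally show ?thesis .
qed

definition MI :: "nat \<Rightarrow> nat \<Rightarrow> rmat \<Rightarrow> rmat \<Rightarrow> nat set \<Rightarrow> rmat" where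
  "MI n p S X I = mscale (1 / real n)
          (mmul p S (mmul n (transp X) (mmul n (projI I) (mmul p X S))))"

lemma MI_bil:
  assumes I: "I \<subseteq> {..<n}" and S: "sym_mat p S"
  shows "dotp p u (mvec p (MI n p S X I) v) =
    1 / real n * (\<Sum>j\<in>I. dotp p (X j) (mvec p S u) * dotp p (X j) (mvec p S v))"
proof -
  define y where "y = mvec p S v"
  define a where "a = mvec p X y"
  define b where "b = mvec n (projI I) a"
  define c where "c = mvec n (transp X) b"
  have mv: "mvec p (MI n p S X I) v = (\<lambda>t. 1 / real n * mvec p S c t)"
    unfolding MI_def mvec_mscale mvec_mmul_gen c_def b_def a_def y_def ..
  have "dotp p u (mvec p (MI n p S X I) v) = 1 / real n * dotp p u (mvec p S c)"
    unfolding mv by (rule dotp_scale_right)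
  also have "dotp p u (mvec p S c) = dotp p (mvec p S u) c" by (rule sym_dotp[OF S])
  also have "\<dots> = (\<Sum>r<p. \<Sum>j<n. mvec p S u r * X j r * b j)"
  proof -
    have cr: "c r = (\<Sum>j<n. X j r * b j)" for r unfolding c_def mvec_def transp_def ..
    show ?thesis unfolding dotp_def cr by (simp add: sum_distrib_left mult_ac)
  qed
  also have "\<dots> = (\<Sum>j<n. \<Sum>r<p. mvec p S u r * X j r * b j)" by (rule sum.swap)
  also have "\<dots> = (\<Sum>j<n. b j * dotp p (X j) (mvec p S u))"
    unfolding dotp_def by (simp add: sum_distrib_left mult_ac)
  also have "\<dots> = (\<Sum>j<n. if j \<in> I then dotp p (X j) (mvec p S u) * dotp p (X j) y else 0)"
  proof (rule sum.cong[OF refl])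
    fix j assume "j \<in> {..<n}"
    hence "b j = (if j \<in> I then a j else 0)" unfolding b_def by (simp add: projI_mvec)
    moreover have "a j = dotp p (X j) y" unfolding a_def mvec_def dotp_def ..
    ultimately show "b j * dotp p (X j) (mvec p S u) =
        (if j \<in> I then dotp p (X j) (mvec p S u) * dotp p (X j) y else 0)" by simp
  qed
  also have "\<dots> = (\<Sum>j\<in>{..<n} \<inter> I. dotp p (X j) (mvec p S u) * dotp p (X j) y)"
    by (rule sum.inter_restrict[symmetric]) simp
  also have "{..<n} \<inter> I = I" using I by auto
  finally show ?thesis unfolding y_def .
qed

lemma sym_from_bil:
  assumes "\<And>u v. dotp p u (mvec p M v) = dotp p v (mvec p M u)"
  shows "sym_mat p M"
  unfolding sym_mat_def
proof (intro allI impI)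
  fix i j assume i: "i < p" and j: "j < p"
  have "M i j = dotp p (evec i) (mvec p M (evec j))"
    using dotp_evec[OF i, of "mvec p M (evec j)"] mvec_evec[OF j] by (simp add: dotp_comm)
  also have "\<dots> = dotp p (evec j) (mvec p M (evec i))" by (rule assms)
  also have "\<dots> = M j i"
    using dotp_evec[OF j, of "mvec p M (evec i)"] mvec_evec[OF i] by (simp add: dotp_comm)
  finally show "M i j = M j i" .
qed

lemma MI_sym: "I \<subseteq> {..<n} \<Longrightarrow> sym_mat p S \<Longrightarrow> sym_mat p (MI n p S X I)"
  by (rule sym_from_bil) (simp add: MI_bil mult.commute)

lemma MI_quad: "I \<subseteq> {..<n} \<Longrightarrow> sym_mat p S \<Longrightarrow>
   quad p (MI n p S X I) v = 1 / real n * (\<Sum>j\<in>I. (dotp p (X j) (mvec p S v))^2)"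
  by (simp add: quad_dotp MI_bil power2_eq_square)

lemma good_count:
  fixes f :: "nat \<Rightarrow> real" and n :: nat
  assumes nn: "\<And>i. f i \<ge> 0" and tot: "(\<Sum>i<n. f i) < real n * tau"
    and tau: "tau > 0" and al: "0 < alpha" "alpha < 1"
  shows "nat \<lceil>real n * (1 - alpha)\<rceil> \<le> card {i. i < n \<and> f i < tau / alpha}"
proof -
  define G where "G = {i. i < n \<and> f i < tau / alpha}"
  define B where "B = {i. i < n \<and> \<not> f i < tau / alpha}"
  have GB: "G \<union> B = {..<n}" "G \<inter> B = {}" unfolding G_def B_def by auto
  have fin: "finite G" "finite B" unfolding G_def B_def by auto
  have cardsum: "card G + card B = n" using card_Un_disjoint[OF fin GB(2)] GB(1) by simp
  have "real (card B) * (tau / alpha) = (\<Sum>i\<in>B. tau / alpha)" by simp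
  also have "\<dots> \<le> (\<Sum>i\<in>B. f i)" by (intro sum_mono) (auto simp: B_def)
  also have "\<dots> \<le> (\<Sum>i<n. f i)" by (rule sum_mono2) (use nn in \<open>auto simp: B_def\<close>)
  also have "\<dots> < real n * tau" by (rule tot)
  finally have "real (card B) * (tau / alpha) < real n * tau" .
  hence "real (card B) * tau < real n * tau * alpha" using al by (simp add: field_simps)
  hence cB: "real (card B) < real n * alpha" using tau by (simp add: mult.commute mult.left_commute)
  have "real (card G) = real n - real (card B)" using cardsum by (simp add: eq_diff_eq)
  hence "real n * (1 - alpha) \<le> real (card G)" using cB by (simp add: algebra_simps)
  hence "\<lceil>real n * (1 - alpha)\<rceil> \<le> int (card G)" by (simp add: ceiling_le_iff)
  thus ?thesis unfolding G_def by (simp add: nat_le_iff)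
qed

theorem lemmaS6p4:
  fixes K :: nat and tau alpha phi_lo :: real
  assumes "K \<ge> 1" and "tau > 0" and "0 < alpha" and "alpha < 1" and "phi_lo > 0"
  shows "\<exists>c1 > 0. \<forall>(n::nat) (p::nat) (delta::real) (phi_hi::real)
           (Sig::rmat) (X::rmat) (Y::rmat) (Bm::rmat) (Q::rmat).
     n \<ge> 1 \<longrightarrow> p \<ge> 1 \<longrightarrow> delta > 1 \<longrightarrow>
     real p / real n \<le> 1 / delta \<longrightarrow> 1 / delta < 1 - alpha \<longrightarrow> phi_hi > 0 \<longrightarrow>
     pos_def p Sig \<longrightarrow>
     \<comment> \<open>(Y,X) \<in> U, with Bm a minimizer (hat B in the paper)\<close>
     (\<forall>B'. total_loss n p (K+1) Y X Bm \<le> total_loss n p (K+1) Y X B') \<longrightarrow>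
     frob_sq n (K+1) (mmul (K+1) (mmul p X Bm) (centering (K+1))) < real n * tau \<longrightarrow>
     \<comment> \<open>X \<in> U_x\<close>
     (\<forall>I. I \<subseteq> {..<n} \<longrightarrow> card I = nat \<lceil>real n * (1 - alpha)\<rceil> \<longrightarrow>
        lambda_min p (mscale (1 / real n)
          (mmul p (inv_sqrt p Sig) (mmul n (transp X) (mmul n (projI I) (mmul p X (inv_sqrt p Sig))))))
        \<ge> phi_lo\<^sup>2) \<longrightarrow>
     opnorm n p (mmul p X (inv_sqrt p Sig)) / sqrt (real n) \<le> phi_hi \<longrightarrow>
     \<comment> \<open>Q\<close>
     mat_eq (K+1) (K+1) (mmul K Q (transp Q)) (centering (K+1)) \<longrightarrow>
     mat_eq K K (mmul (K+1) (transp Q) Q) idm \<longrightarrow>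
     loewner_ge (K * p)
       (mscale (1 / real n) (\<lambda>r s. \<Sum>i<n.
          kron p (hessian (\<lambda>u. mlloss (K+1) (Y i) (mvec K Q u))
                          (mvec p (transp (mmul (K+1) Bm Q)) (X i)))
                 (\<lambda>a b. X i a * X i b) r s))
       (mscale c1 (kron p idm Sig))"
proof -
  define R where "R = sqrt (tau / alpha)"
  define cH where "cH = exp (-4*R) / real (K+1)"
  define c1 where "c1 = cH * phi_lo\<^sup>2"
  have cHpos: "cH > 0" unfolding cH_def by simp
  have c1pos: "c1 > 0" unfolding c1_def using cHpos assms(5) by simp
  show ?thesis
  proof (intro exI[of _ c1] conjI c1pos allI impI)
    fix n p :: nat and delta phi_hi :: real and Sig X Y Bm Q :: rmat
    assume n1: "n \<ge> 1" and p1: "p \<ge> 1" and pd: "pos_def p Sig"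
      and frob: "frob_sq n (K+1) (mmul (K+1) (mmul p X Bm) (centering (K+1))) < real n * tau"
      and lamh: "\<forall>I. I \<subseteq> {..<n} \<longrightarrow> card I = nat \<lceil>real n * (1 - alpha)\<rceil> \<longrightarrow>
        lambda_min p (mscale (1 / real n)
          (mmul p (inv_sqrt p Sig) (mmul n (transp X) (mmul n (projI I) (mmul p X (inv_sqrt p Sig))))))
        \<ge> phi_lo\<^sup>2"
      and QQ: "mat_eq (K+1) (K+1) (mmul K Q (transp Q)) (centering (K+1))"
      and QtQ: "mat_eq K K (mmul (K+1) (transp Q) Q) idm"
    have symSig: "sym_mat p Sig" using pd by (simp add: pos_def_def)
    obtain w lam where s: "spec p Sig w lam" using spectral[OF symSig] by blast
    define S where "S = inv_sqrt p Sig"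
    have S: "S = S0 p w lam" unfolding S_def by (rule inv_sqrt_char[OF pd s])
    have symS: "sym_mat p S" unfolding S by (rule S0_sym)
    define zi where "zi = mmul (K+1) (mmul p X Bm) (centering (K+1))"
    define f where "f = (\<lambda>i. \<Sum>k<K+1. (zi i k)\<^sup>2)"
    have fnn: "\<And>i. f i \<ge> 0" unfolding f_def by (intro sum_nonneg) auto
    have ftot: "(\<Sum>i<n. f i) < real n * tau" using frob unfolding frob_sq_def f_def zi_def .
    have "nat \<lceil>real n * (1 - alpha)\<rceil> \<le> card {i. i < n \<and> f i < tau / alpha}"
      by (rule good_count[OF fnn ftot assms(2) assms(3) assms(4)])
    then obtain I where IG: "I \<subseteq> {i. i < n \<and> f i < tau / alpha}"
      and cI: "card I = nat \<lceil>real n * (1 - alpha)\<rceil>" and finI: "finite I"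
      by (rule obtain_subset_with_card_n)
    have In: "I \<subseteq> {..<n}" using IG by auto
    have lmI: "lambda_min p (MI n p S X I) \<ge> phi_lo\<^sup>2"
      using lamh In cI unfolding MI_def S_def by blast
    have MIlow: "quad p (MI n p S X I) v \<ge> phi_lo\<^sup>2 * dotp p v v" for v
      by (rule lambda_min_bound[OF MI_sym[OF In symS] p1 lmI])
    have key: "(\<Sum>j\<in>I. (dotp p (X j) y)\<^sup>2) \<ge> real n * phi_lo\<^sup>2 * quad p Sig y" for y
    proof -
      obtain v where v: "\<forall>i<p. mvec p (S0 p w lam) v i = y i" "dotp p v v = quad p Sig y"
        using S0_preimage[OF pd s] by blast
      have "(\<Sum>j\<in>I. (dotp p (X j) (mvec p S v))\<^sup>2) = (\<Sum>j\<in>I. (dotp p (X j) y)\<^sup>2)"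
        by (intro sum.cong refl arg_cong[where f = "\<lambda>t. t\<^sup>2"] dotp_cong) (use v S in auto)
      moreover have "1 / real n * (\<Sum>j\<in>I. (dotp p (X j) (mvec p S v))\<^sup>2) \<ge> phi_lo\<^sup>2 * quad p Sig y"
        using MIlow[of v] v(2) MI_quad[OF In symS] by simp
      moreover have "real n > 0" using n1 by simp
      ultimately show ?thesis by (simp add: field_simps)
    qed
    define u where "u = (\<lambda>i. mvec p (transp (mmul (K+1) Bm Q)) (X i))"
    have zl: "mvec K Q (u i) k = zi i k" if "k < K+1" for i k
    proof -
      have "zi i k = (\<Sum>m<K+1. (\<Sum>r<p. X i r * Bm r m) * centering (K+1) m k)"
        unfolding zi_def mmul_def ..
      thus ?thesis unfolding u_def zlink[OF QQ that] by simp
    qed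
    have cs: "\<And>a. a < K \<Longrightarrow> (\<Sum>k<K+1. Q k a) = 0" using colsum_zero[OF QQ] by blast
    define Hs where "Hs = (\<lambda>i. hessian (\<lambda>u. mlloss (K+1) (Y i) (mvec K Q u)) (u i))"
    have HsH2: "quad K (Hs i) x = quad K (H2 K Q (u i)) x" for i x
      by (rule quad_cong_mat) (unfold Hs_def, rule hess_f)
    have Hnn: "quad K (Hs i) x \<ge> 0" for i x unfolding HsH2 by (rule H2_nonneg)
    have Hlow: "quad K (Hs i) x \<ge> cH * (\<Sum>a<K. (x a)\<^sup>2)" if iI: "i \<in> I" for i x
    proof -
      have fi: "f i < tau / alpha" using IG iI by auto
      have zb: "\<bar>mvec K Q (u i) k\<bar> \<le> R" if k: "k < K+1" for k
      proof -
        have "(zi i k)\<^sup>2 \<le> f i" unfolding f_def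
          by (rule member_le_sum[of k "{..<K+1}" "\<lambda>k. (zi i k)\<^sup>2"]) (use k in auto)
        hence "(zi i k)\<^sup>2 \<le> tau / alpha" using fi by simp
        hence "sqrt ((zi i k)\<^sup>2) \<le> R" unfolding R_def by (rule real_sqrt_le_mono)
        thus ?thesis using zl[OF k] by simp
      qed
      show ?thesis unfolding HsH2 cH_def by (rule H2_bound[OF QtQ cs zb])
    qed
    show "loewner_ge (K * p)
       (mscale (1 / real n) (\<lambda>r s. \<Sum>i<n.
          kron p (hessian (\<lambda>u. mlloss (K+1) (Y i) (mvec K Q u))
                          (mvec p (transp (mmul (K+1) Bm Q)) (X i)))
                 (\<lambda>a b. X i a * X i b) r s))
       (mscale c1 (kron p idm Sig))"
      unfolding loewner_ge_def psd_def
    proof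
      fix v :: rvec
      define V where "V = (\<lambda>a t. v (t + a * p))"
      define W where "W = (\<lambda>i a. \<Sum>t<p. v (t + a * p) * X i t)"
      have Wd: "W i a = dotp p (X i) (V a)" for i a
        unfolding W_def V_def dotp_def by (simp add: mult.commute)
      have qA: "quad (K * p) (mscale (1 / real n) (\<lambda>r s. \<Sum>i<n.
          kron p (hessian (\<lambda>u. mlloss (K+1) (Y i) (mvec K Q u))
                          (mvec p (transp (mmul (K+1) Bm Q)) (X i)))
                 (\<lambda>a b. X i a * X i b) r s)) v = 1 / real n * (\<Sum>i<n. quad K (Hs i) (W i))"
        unfolding quad_mscale quad_msum kron_quad_rank1 Hs_def u_def W_def ..
      have qB: "quad (K * p) (mscale c1 (kron p idm Sig)) v = c1 * (\<Sum>a<K. quad p Sig (V a))"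
        unfolding quad_mscale kron_quad_idm V_def ..
      have "(\<Sum>i<n. quad K (Hs i) (W i)) \<ge> (\<Sum>i\<in>I. quad K (Hs i) (W i))"
        by (rule sum_mono2) (use In Hnn in auto)
      moreover have "(\<Sum>i\<in>I. quad K (Hs i) (W i)) \<ge> (\<Sum>i\<in>I. cH * (\<Sum>a<K. (W i a)\<^sup>2))"
        by (rule sum_mono) (rule Hlow)
      moreover have "(\<Sum>i\<in>I. cH * (\<Sum>a<K. (W i a)\<^sup>2)) = cH * (\<Sum>a<K. \<Sum>i\<in>I. (dotp p (X i) (V a))\<^sup>2)"
        unfolding Wd by (simp add: sum_distrib_left sum.swap[of _ I])
      moreover have "(\<Sum>a<K. \<Sum>i\<in>I. (dotp p (X i) (V a))\<^sup>2) \<ge> (\<Sum>a<K. real n * phi_lo\<^sup>2 * quad p Sig (V a))"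
        by (rule sum_mono) (rule key)
      ultimately have "(\<Sum>i<n. quad K (Hs i) (W i)) \<ge> cH * (\<Sum>a<K. real n * phi_lo\<^sup>2 * quad p Sig (V a))"
        using cHpos by (smt (verit) mult_left_mono)
      moreover have "(\<Sum>a<K. real n * phi_lo\<^sup>2 * quad p Sig (V a)) = real n * phi_lo\<^sup>2 * (\<Sum>a<K. quad p Sig (V a))"
        by (simp add: sum_distrib_left)
      ultimately have T: "(\<Sum>i<n. quad K (Hs i) (W i)) \<ge> real n * (c1 * (\<Sum>a<K. quad p Sig (V a)))"
        unfolding c1_def by (simp add: mult_ac)
      have np: "real n > 0" using n1 by simp
      have "1 / real n * (\<Sum>i<n. quad K (Hs i) (W i)) \<ge> 1 / real n * (real n * (c1 * (\<Sum>a<K. quad p Sig (V a))))"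
        using T np by (intro mult_left_mono) auto
      hence "1 / real n * (\<Sum>i<n. quad K (Hs i) (W i)) \<ge> c1 * (\<Sum>a<K. quad p Sig (V a))"
        using np by simp
      thus "quad (K * p) (msub (mscale (1 / real n) (\<lambda>r s. \<Sum>i<n.
          kron p (hessian (\<lambda>u. mlloss (K+1) (Y i) (mvec K Q u))
                          (mvec p (transp (mmul (K+1) Bm Q)) (X i)))
                 (\<lambda>a b. X i a * X i b) r s)) (mscale c1 (kron p idm Sig))) v \<ge> 0"
        unfolding quad_msub qA qB by simp
    qed
  qed
qed

end
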